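(* Let $(X_n)$ be a stationary, reversible, discrete-in-time Markov process on $\mathbb{R}^d$ with positive transition density $p$, ergodic with respect to a unique invariant probability $\mu(\mathrm{d}x)=\pi(x)\mathrm{d}x$, $\pi>0$. Let $A,B\subset\mathbb{R}^d$ be disjoint closed sets with smooth boundaries with $(A\cup B)^c\neq\emptyset$, let $q$ be the forward committor from $A$ to $B$ and $k_{AB}$ the transition rate. Define $\mathcal{F}_{AB}=\{f\in L^2_\mu(\mathbb{R}^d): f|_A\equiv0,\ f|_B\equiv1\}$. Then $$\mathcal{E}(f)=k_{AB}+\mathcal{E}(f-q)\quad\text{for all }f\in\mathcal{F}_{AB}.$$ In particular, $q$ solves $\min_{f\in\mathcal{F}_{AB}}\mathcal{E}(f)$ and the minimum value is $k_{AB}$.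
   Context: Reversible: $p(x,y)\pi(x)=p(y,x)\pi(y)$. $\mathcal{E}(f)=\frac12\int\int(f(y)-f(x))^2p(x,y)\,\mathrm{d}y\,\mu(\mathrm{d}x)$. A segment $X_m,\dots,X_{m+j}$ is reactive if $X_m\in A$, $X_{m+j}\in B$, $X_i\in(A\cup B)^c$ for $m<i<m+j$; $k_{AB}=\lim_{N\to\infty}M_N^R/N$ where $M_N^R$ counts reactive segments starting in the first $N$ steps. $q(x)=\mathbb{P}(\text{starting from }x,\ X_n\text{ enters }B\text{ before }A)$, which satisfies $\int p(x,y)q(y)\,\mathrm{d}y=q(x)$ on $(A\cup B)^c$, $q|_A=0$, $q|_B=1$. *)

theory Defs
  imports "HOL-Probability.Probability"
begin

text \<open>C-infinity real-valued functions on an open set: continuous, differentiable, and every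
  directional derivative is again C-infinity (greatest fixed point = derivatives of all orders).\<close>
coinductive smooth_on :: "'a::euclidean_space set \<Rightarrow> ('a \<Rightarrow> real) \<Rightarrow> bool" where
  "\<lbrakk> continuous_on U f; f differentiable_on U;
     \<And>v. smooth_on U (\<lambda>x. frechet_derivative f (at x) v) \<rbrakk> \<Longrightarrow> smooth_on U f"

definition smooth_boundary :: "'a::euclidean_space set \<Rightarrow> bool" where
  "smooth_boundary S \<longleftrightarrow>
     (\<forall>z\<in>frontier S. \<exists>U \<phi>. open U \<and> z \<in> U \<and> smooth_on U \<phi> \<and>
        frechet_derivative \<phi> (at z) \<noteq> (\<lambda>v. 0) \<and> S \<inter> U = {x\<in>U. \<phi> x \<le> 0})"

text \<open>Iterated integral: probability, starting from x, that the next steps lie in the given sets.\<close>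
fun path_int :: "('a::euclidean_space \<Rightarrow> 'a \<Rightarrow> real) \<Rightarrow> 'a set list \<Rightarrow> 'a \<Rightarrow> real" where
  "path_int p [] x = 1"
| "path_int p (S # Ss) x = (\<integral>y. indicator S y * p x y * path_int p Ss y \<partial>lborel)"

text \<open>Probability (for the chain started at x) of entering B before A within n steps
  (convention: 1 on B, 0 on A).\<close>
fun hit_before :: "('a::euclidean_space \<Rightarrow> 'a \<Rightarrow> real) \<Rightarrow> 'a set \<Rightarrow> 'a set \<Rightarrow> nat \<Rightarrow> 'a \<Rightarrow> real" where
  "hit_before p A B 0 x = (if x \<in> B then 1 else 0)"
| "hit_before p A B (Suc n) x =
     (if x \<in> B then 1 else if x \<in> A then 0 else (\<integral>y. p x y * hit_before p A B n y \<partial>lborel))"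

definition committor :: "('a::euclidean_space \<Rightarrow> 'a \<Rightarrow> real) \<Rightarrow> 'a set \<Rightarrow> 'a set \<Rightarrow> 'a \<Rightarrow> real" where
  "committor p A B x = lim (\<lambda>n. hit_before p A B n x)"

definition reactive_count :: "'a set \<Rightarrow> 'a set \<Rightarrow> (nat \<Rightarrow> 'w \<Rightarrow> 'a) \<Rightarrow> nat \<Rightarrow> 'w \<Rightarrow> nat" where
  "reactive_count A B X N \<omega> = card {m. m < N \<and> (\<exists>j>0. X m \<omega> \<in> A \<and> X (m + j) \<omega> \<in> B \<and>
       (\<forall>i. m < i \<and> i < m + j \<longrightarrow> X i \<omega> \<notin> A \<union> B))}"

definition trans_rate :: "'w measure \<Rightarrow> 'a set \<Rightarrow> 'a set \<Rightarrow> (nat \<Rightarrow> 'w \<Rightarrow> 'a) \<Rightarrow> real" where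
  "trans_rate M A B X = (THE k. AE \<omega> in M.
       (\<lambda>N. real (reactive_count A B X N \<omega>) / real N) \<longlonglongrightarrow> k)"

definition dirichlet_energy :: "('a::euclidean_space \<Rightarrow> 'a \<Rightarrow> real) \<Rightarrow> ('a \<Rightarrow> real) \<Rightarrow> ('a \<Rightarrow> real) \<Rightarrow> real" where
  "dirichlet_energy p \<pi> f =
     (1/2) * (\<integral>x. (\<integral>y. (f y - f x)^2 * p x y \<partial>lborel) \<partial>(density lborel (\<lambda>x. ennreal (\<pi> x))))"

definition L2_mu :: "('a::euclidean_space \<Rightarrow> real) \<Rightarrow> ('a \<Rightarrow> real) \<Rightarrow> bool" where
  "L2_mu \<pi> f \<longleftrightarrow> f \<in> borel_measurable borel \<and>
     integrable (density lborel (\<lambda>x. ennreal (\<pi> x))) (\<lambda>x. (f x)^2)"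

definition F_AB :: "('a::euclidean_space \<Rightarrow> real) \<Rightarrow> 'a set \<Rightarrow> 'a set \<Rightarrow> ('a \<Rightarrow> real) set" where
  "F_AB \<pi> A B = {f. L2_mu \<pi> f \<and> (\<forall>x\<in>A. f x = 0) \<and> (\<forall>x\<in>B. f x = 1)}"

end

theory Submission
  imports Defs
begin


lemma funpow_meas[measurable]:
  assumes "T \<in> measurable N N" shows "(T^^m) \<in> measurable N N"
  by (induction m) (auto intro: measurable_compose[OF _ assms])

lemma funpow_distr:
  assumes T: "T \<in> measurable N N" and pres: "distr N N T = N"
  shows "distr N N (T^^m) = N"
proof (induction m)
  case 0 then show ?case by (simp add: distr_id[unfolded id_def])
next
  case (Suc m)
  have "distr N N (T^^Suc m) = distr (distr N N (T^^m)) N T"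
    by (subst distr_distr[OF T funpow_meas[OF T]]) simp
  also have "\<dots> = N" using Suc pres by simp
  finally show ?case .
qed

lemma funpow_integral:
  assumes T: "T \<in> measurable N N" and pres: "distr N N T = N"
    and h: "(h::_\<Rightarrow>real) \<in> borel_measurable N"
  shows "(\<integral>w. h ((T^^m) w) \<partial>N) = (\<integral>w. h w \<partial>N)"
proof -
  have "(\<integral>w. h ((T^^m) w) \<partial>N) = (\<integral>w. h w \<partial>distr N N (T^^m))"
    using integral_distr[of "T^^m" N N h] funpow_meas[OF T] h by simp
  then show ?thesis using funpow_distr[OF T pres] by simp
qed

definition bsum :: "('a \<Rightarrow> 'a) \<Rightarrow> ('a \<Rightarrow> real) \<Rightarrow> nat \<Rightarrow> 'a \<Rightarrow> real" where
  "bsum T g n w = (\<Sum>m<n. g ((T^^m) w))"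

lemma bsum_add: "bsum T g (n + k) w = bsum T g n w + bsum T g k ((T^^n) w)"
proof (induction k)
  case 0 then show ?case by (simp add: bsum_def)
next
  case (Suc k)
  have "(T ^^ k) ((T ^^ n) w) = (T^^(n+k)) w" by (simp add: funpow_add add.commute)
  then show ?case using Suc by (simp add: bsum_def)
qed

lemma bsum_Suc: "bsum T g (Suc n) w = g w + bsum T g n (T w)"
  using bsum_add[of T g 1 n w] by (simp add: bsum_def)

lemma bsum_nonneg: "(\<And>w. 0 \<le> g w) \<Longrightarrow> 0 \<le> bsum T g n w"
  by (simp add: bsum_def sum_nonneg)

lemma bsum_le: "(\<And>w. g w \<le> 1) \<Longrightarrow> bsum T g n w \<le> n"
proof -
  assume "\<And>w. g w \<le> 1"
  then have "(\<Sum>m<n. g ((T^^m) w)) \<le> (\<Sum>m<n. 1)" by (intro sum_mono) auto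
  then show ?thesis by (simp add: bsum_def)
qed

lemma bsum_mono: "(\<And>w. g w \<le> h w) \<Longrightarrow> bsum T g n w \<le> bsum T h n w"
  unfolding bsum_def by (intro sum_mono) auto

lemma bsum_meas[measurable]:
  assumes "T \<in> measurable N N" "g \<in> borel_measurable N"
  shows "bsum T g n \<in> borel_measurable N"
  unfolding bsum_def using assms by measurable

locale erg_sys = prob_space N for N :: "'a measure" +
  fixes T :: "'a \<Rightarrow> 'a"
  assumes T_meas[measurable]: "T \<in> measurable N N"
    and T_pres: "distr N N T = N"
begin

lemma bsum_integrable:
  assumes [measurable]: "g \<in> borel_measurable N" and "\<And>w. 0 \<le> g w" "\<And>w. g w \<le> B"
  shows "integrable N (bsum T g n)"
proof (rule integrable_const_bound[where B="n * B"])
  show "AE x in N. norm (bsum T g n x) \<le> real n * B"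
  proof (intro AE_I2)
    fix x
    have "bsum T g n x \<le> (\<Sum>m<n. B)" unfolding bsum_def by (intro sum_mono) (use assms in auto)
    then show "norm (bsum T g n x) \<le> real n * B" using bsum_nonneg[of g T n x] assms(2) by simp
  qed
qed measurable

lemma bsum_integral:
  assumes [measurable]: "g \<in> borel_measurable N" and "\<And>w. 0 \<le> g w" "\<And>w. g w \<le> B"
  shows "(\<integral>w. bsum T g n w \<partial>N) = n * (\<integral>w. g w \<partial>N)"
proof -
  have int: "integrable N (\<lambda>w. g ((T^^m) w))" for m
  proof (rule integrable_const_bound[where B=B])
    show "AE x in N. norm (g ((T ^^ m) x)) \<le> B" using assms by (intro AE_I2) auto
  qed measurable
  have "(\<integral>w. bsum T g n w \<partial>N) = (\<Sum>m<n. (\<integral>w. g ((T^^m) w) \<partial>N))"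
    unfolding bsum_def by (rule Bochner_Integration.integral_sum) (use int in auto)
  also have "\<dots> = (\<Sum>m<n. (\<integral>w. g w \<partial>N))"
    by (intro sum.cong refl funpow_integral[OF T_meas T_pres]) simp
  finally show ?thesis by simp
qed

lemma stop_bound:
  assumes g[measurable]: "g \<in> borel_measurable N" and g0: "\<And>w. 0 \<le> g w" and g1: "\<And>w. g w \<le> 1"
    and E: "measure N {w\<in>space N. \<exists>n. 1 \<le> n \<and> bsum T g n w > c * n} = 1"
  shows "c \<le> (\<integral>w. g w \<partial>N)"
proof (rule ccontr)
  assume "\<not> ?thesis"
  then have lt: "(\<integral>w. g w \<partial>N) < c" by simp
  define d where "d = c - (\<integral>w. g w \<partial>N)"
  have d: "d > 0" using lt by (simp add: d_def)
  have "0 \<le> (\<integral>w. g w \<partial>N)" using g0 by (simp add: integral_nonneg)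
  then have c: "c > 0" using lt by simp
  define EL where "EL L = {w\<in>space N. \<exists>n. 1 \<le> n \<and> n \<le> L \<and> bsum T g n w > c * n}" for L::nat
  have EL_meas[measurable]: "EL L \<in> sets N" for L unfolding EL_def by measurable
  have inc: "incseq EL" unfolding incseq_def EL_def by auto
  have un: "(\<Union>L. EL L) = {w\<in>space N. \<exists>n. 1 \<le> n \<and> bsum T g n w > c * n}"
    unfolding EL_def by auto
  have lim: "(\<lambda>L. measure N (EL L)) \<longlonglongrightarrow> 1"
    using finite_Lim_measure_incseq[of EL] inc un E EL_meas by (metis image_subsetI)
  have "1 - d / (2*c) < 1" using d c by simp
  then have ev: "eventually (\<lambda>L. 1 - d / (2*c) < measure N (EL L)) sequentially"
    using order_tendstoD(1)[OF lim] by blast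
  obtain L where L1: "1 \<le> L" and L2: "1 - d / (2*c) < measure N (EL L)"
    using eventually_conj[OF ev eventually_ge_at_top[of 1]] by (auto simp: eventually_sequentially)
  define Bad where "Bad = space N - EL L"
  have Bad_meas[measurable]: "Bad \<in> sets N" unfolding Bad_def by measurable
  have mBad: "measure N Bad = 1 - measure N (EL L)"
    unfolding Bad_def using prob_compl[OF EL_meas[of L]] by simp
  have cmB: "c * measure N Bad < d / 2"
  proof -
    have "c * (1 - d / (2*c)) < c * measure N (EL L)" using L2 c by simp
    then have "c - d/2 < c * measure N (EL L)" using c by (simp add: algebra_simps)
    then show ?thesis unfolding mBad by (simp add: algebra_simps)
  qed
  define g' where "g' w = g w + c * indicator Bad w" for w
  have g'_meas[measurable]: "g' \<in> borel_measurable N" unfolding g'_def by measurable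
  have g'0: "0 \<le> g' w" for w using g0[of w] c by (simp add: g'_def)
  have g'1: "g' w \<le> 1 + c" for w using g1[of w] c by (simp add: g'_def indicator_def)
  have gg': "g w \<le> g' w" for w using c by (simp add: g'_def)
  have key: "\<forall>w\<in>space N. c * (real n - real L) \<le> bsum T g' n w" for n
  proof (induction n rule: less_induct)
    case (less n)
    show ?case
    proof
      fix w assume w: "w \<in> space N"
      show "c * (real n - real L) \<le> bsum T g' n w"
      proof (cases "n \<le> L")
        case True
        then have "c * (real n - real L) \<le> 0" using c by (simp add: mult_nonneg_nonpos)
        also have "0 \<le> bsum T g' n w" using g'0 by (rule bsum_nonneg)
        finally show ?thesis .
      next
        case False
        show ?thesis
        proof (cases "w \<in> EL L")
          case True
          then obtain k where k: "1 \<le> k" "k \<le> L" "bsum T g k w > c * k" unfolding EL_def by auto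
          have nk: "n = k + (n - k)" using k False by simp
          have split: "bsum T g' n w = bsum T g' k w + bsum T g' (n-k) ((T^^k) w)"
            using bsum_add[of T g' k "n-k" w] nk by simp
          have wk: "(T^^k) w \<in> space N" using measurable_space[OF funpow_meas[OF T_meas] w] .
          have IH: "c * (real (n-k) - real L) \<le> bsum T g' (n-k) ((T^^k) w)"
          proof -
            have "n - k < n" using k \<open>\<not> n \<le> L\<close> by simp
            then show ?thesis using less wk by blast
          qed
          have "bsum T g k w \<le> bsum T g' k w" by (rule bsum_mono) (rule gg')
          moreover have "real (n-k) = real n - real k" using nk by (simp add: of_nat_diff)
          ultimately show ?thesis using split IH k(3) by (simp add: algebra_simps)
        next
          case False
          then have "w \<in> Bad" using w by (simp add: Bad_def)
          then have gw: "c \<le> g' w" using g0[of w] by (simp add: g'_def)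
          obtain m where nm: "n = Suc m" using \<open>\<not> n \<le> L\<close> L1 by (cases n) auto
          have Tw: "T w \<in> space N" using measurable_space[OF T_meas w] .
          have IH: "c * (real m - real L) \<le> bsum T g' m (T w)" proof -
            have "m < n" using nm by simp
            then show ?thesis using less Tw by blast
          qed
          show ?thesis using bsum_Suc[of T g' m w] nm IH gw by (simp add: algebra_simps)
        qed
      qed
    qed
  qed
  have ig': "(\<integral>w. g' w \<partial>N) = (\<integral>w. g w \<partial>N) + c * measure N Bad"
  proof -
    have "(\<integral>w. g' w \<partial>N) = (\<integral>w. g w \<partial>N) + (\<integral>w. c * indicator Bad w \<partial>N)"
      unfolding g'_def
      by (rule Bochner_Integration.integral_add)
         (auto intro!: integrable_const_bound[where B=1] simp: g0 g1)
    then show ?thesis by simp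
  qed
  obtain n :: nat where n: "2 * c * L / d < n" using reals_Archimedean2 by blast
  have "0 < 2 * c * L / d" using c d L1 by simp
  then have npos: "0 < real n" using n by linarith
  have "(\<integral>w. c * (real n - real L) \<partial>N) \<le> (\<integral>w. bsum T g' n w \<partial>N)"
    using key by (intro integral_mono_AE) (auto intro!: bsum_integrable[OF g'_meas g'0 g'1])
  then have "c * (real n - real L) \<le> n * ((\<integral>w. g w \<partial>N) + c * measure N Bad)"
    using bsum_integral[OF g'_meas g'0 g'1, of n] ig' by (simp add: prob_space)
  moreover have "n * (c * measure N Bad) < n * (d/2)" using cmB npos by simp
  moreover have "c * L < n * (d/2)" using n d by (simp add: field_simps)
  ultimately have "n * c - n * d < n * (\<integral>w. g w \<partial>N)" by (simp add: algebra_simps)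
  then have "c - d < (\<integral>w. g w \<partial>N)" using npos
    by (metis mult_less_cancel_left_pos right_diff_distrib)
  then show False unfolding d_def by simp
qed

lemma V_invariant:
  assumes g1: "\<And>w. g w \<le> 1" and g0: "\<And>w. 0 \<le> g w"
  shows "(\<exists>k::nat. \<forall>K. \<exists>n\<ge>K. bsum T g n w > (c + 1/(real k+1)) * n) \<longleftrightarrow>
         (\<exists>k::nat. \<forall>K. \<exists>n\<ge>K. bsum T g n (T w) > (c + 1/(real k+1)) * n)"
proof
  assume "\<exists>k::nat. \<forall>K. \<exists>n\<ge>K. bsum T g n w > (c + 1/(real k+1)) * n"
  then obtain k :: nat where k: "\<forall>K. \<exists>n\<ge>K. bsum T g n w > (c + 1/(real k+1)) * n" by blast
  define \<delta> where "\<delta> = 1/(real k+1)"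
  have \<delta>: "\<delta> > 0" by (simp add: \<delta>_def)
  have \<delta>2: "1/(real (2*k+1)+1) = \<delta>/2" by (simp add: \<delta>_def field_simps)
  obtain n0 :: nat where n0: "2*(\<bar>c\<bar>+1)/\<delta> + 1 \<le> n0" using real_arch_simple by blast
  have "\<forall>K::nat. \<exists>n\<ge>K. bsum T g n (T w) > (c + 1/(real (2*k+1)+1)) * n"
  proof
    fix K :: nat
    obtain n where n: "n \<ge> max (Suc K) n0" and Sn: "bsum T g n w > (c + \<delta>) * n"
      using k \<delta>_def by blast
    obtain m where nm: "n = Suc m" using n by (cases n) auto
    have mK: "m \<ge> K" using n nm by simp
    have "2*(\<bar>c\<bar>+1)/\<delta> \<le> m" using n0 n nm by simp
    then have dm: "2*(\<bar>c\<bar>+1) \<le> \<delta> * m" using \<delta> by (simp add: pos_divide_le_eq mult.commute)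
    have "bsum T g n w \<le> 1 + bsum T g m (T w)" using bsum_Suc[of T g m w] nm g1[of w] by simp
    then have "(c + \<delta>) * (real m + 1) - 1 < bsum T g m (T w)" using Sn nm by (simp add: add.commute)
    moreover have "(c + \<delta>/2) * real m \<le> (c + \<delta>) * (real m + 1) - 1"
    proof -
      have "-c \<le> \<bar>c\<bar>" by simp
      then show ?thesis using dm \<delta> by (simp add: algebra_simps)
    qed
    ultimately have "(c + 1/(real (2*k+1)+1)) * real m < bsum T g m (T w)"
      by (subst \<delta>2) linarith
    then show "\<exists>n\<ge>K. bsum T g n (T w) > (c + 1/(real (2*k+1)+1)) * n"
      using mK by blast
  qed
  then show "\<exists>k::nat. \<forall>K. \<exists>n\<ge>K. bsum T g n (T w) > (c + 1/(real k+1)) * n" by blast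
next
  assume "\<exists>k::nat. \<forall>K. \<exists>n\<ge>K. bsum T g n (T w) > (c + 1/(real k+1)) * n"
  then obtain k :: nat where k: "\<forall>K. \<exists>n\<ge>K. bsum T g n (T w) > (c + 1/(real k+1)) * n" by blast
  define \<delta> where "\<delta> = 1/(real k+1)"
  have \<delta>: "\<delta> > 0" by (simp add: \<delta>_def)
  have \<delta>2: "1/(real (2*k+1)+1) = \<delta>/2" by (simp add: \<delta>_def field_simps)
  obtain n0 :: nat where n0: "2*(\<bar>c\<bar>+1)/\<delta> + 1 \<le> n0" using real_arch_simple by blast
  have "\<forall>K::nat. \<exists>n\<ge>K. bsum T g n w > (c + 1/(real (2*k+1)+1)) * n"
  proof
    fix K :: nat
    obtain n where n: "n \<ge> max K n0" and Sn: "bsum T g n (T w) > (c + \<delta>) * n"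
      using k \<delta>_def by blast
    have "2*(\<bar>c\<bar>+1)/\<delta> + 1 \<le> n" using n0 n by simp
    then have "2*(\<bar>c\<bar>+1)/\<delta> \<le> real n - 1" by simp
    then have dm: "2*(\<bar>c\<bar>+1) \<le> \<delta> * (real n - 1)" using \<delta> by (simp add: pos_divide_le_eq mult.commute)
    have "bsum T g n (T w) \<le> bsum T g (Suc n) w" using bsum_Suc[of T g n w] g0[of w] by simp
    then have "(c + \<delta>) * real n < bsum T g (Suc n) w" using Sn by simp
    moreover have "(c + \<delta>/2) * real (Suc n) \<le> (c + \<delta>) * real n"
    proof -
      have "c \<le> \<bar>c\<bar>" by simp
      have e1: "\<delta> * (real n - 1) = \<delta> * real n - \<delta>" by (simp add: algebra_simps)
      have h: "2*c + \<delta> \<le> \<delta> * real n" using dm \<open>c \<le> \<bar>c\<bar>\<close> e1 by (smt (verit))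
      have e2: "(c + \<delta>/2) * real (Suc n) = c*n + c + (\<delta>*n)/2 + \<delta>/2" by (simp add: algebra_simps)
      have e3: "(c + \<delta>) * real n = c*n + \<delta>*n" by (simp add: algebra_simps)
      show ?thesis unfolding e2 e3 using h by linarith
    qed
    ultimately have "(c + 1/(real (2*k+1)+1)) * real (Suc n) < bsum T g (Suc n) w"
      by (subst \<delta>2) linarith
    moreover have "Suc n \<ge> K" using n by simp
    ultimately show "\<exists>n\<ge>K. bsum T g n w > (c + 1/(real (2*k+1)+1)) * n"
      by blast
  qed
  then show "\<exists>k::nat. \<forall>K. \<exists>n\<ge>K. bsum T g n w > (c + 1/(real k+1)) * n" by blast
qed

lemma birkhoff_upper:
  assumes g[measurable]: "g \<in> borel_measurable N" and g0: "\<And>w. 0 \<le> g w" and g1: "\<And>w. g w \<le> 1"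
    and erg: "\<And>S. S \<in> sets N \<Longrightarrow> (\<forall>w\<in>space N. w \<in> S \<longleftrightarrow> T w \<in> S) \<Longrightarrow>
                measure N S = 0 \<or> measure N S = 1"
  shows "AE w in N. \<forall>e>0. eventually (\<lambda>n. bsum T g n w \<le> ((\<integral>w. g w \<partial>N) + e) * n) sequentially"
proof -
  define I where "I = (\<integral>w. g w \<partial>N)"
  define V where "V c = {w\<in>space N. \<exists>k::nat. \<forall>K. \<exists>n\<ge>K. bsum T g n w > (c + 1/(real k+1)) * n}" for c
  have Vm[measurable]: "V c \<in> sets N" for c unfolding V_def by measurable
  have V0: "measure N (V c) = 0" if c: "c > I" for c
  proof -
    have inv: "\<forall>w\<in>space N. w \<in> V c \<longleftrightarrow> T w \<in> V c"
      using V_invariant[where g=g, OF g1 g0] measurable_space[OF T_meas] unfolding V_def by blast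
    show ?thesis
    proof (rule ccontr)
      assume "measure N (V c) \<noteq> 0"
      then have V1: "measure N (V c) = 1" using erg[OF Vm inv] by blast
      define E where "E = {w\<in>space N. \<exists>n. 1 \<le> n \<and> bsum T g n w > c * n}"
      have Em[measurable]: "E \<in> sets N" unfolding E_def by measurable
      have "V c \<subseteq> E"
      proof
        fix w assume "w \<in> V c"
        then obtain k :: nat where w: "w \<in> space N" and k: "\<forall>K. \<exists>n\<ge>K. bsum T g n w > (c + 1/(real k+1)) * n"
          unfolding V_def by blast
        then obtain n where n: "n \<ge> 1" "bsum T g n w > (c + 1/(real k+1)) * n" by blast
        have "c * n \<le> (c + 1/(real k+1)) * n" by (simp add: algebra_simps)
        then have "c * n < bsum T g n w" using n by linarith
        then show "w \<in> E" using w n(1) unfolding E_def by blast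
      qed
      then have "1 \<le> measure N E" using V1 finite_measure_mono[OF _ Em] by metis
      then have "measure N E = 1" using prob_le_1[of E] by simp
      then have "c \<le> I" unfolding I_def E_def by (rule stop_bound[OF g g0 g1])
      then show False using c by simp
    qed
  qed
  have "AE w in N. w \<notin> V (I + 1/(real j+1))" for j :: nat
  proof (rule AE_not_in)
    have "I < I + 1/(real j+1)" by simp
    then show "V (I + 1/(real j+1)) \<in> null_sets N"
      using V0[OF \<open>I < I + 1/(real j+1)\<close>] by (intro null_setsI) (simp_all add: emeasure_eq_measure)
  qed
  then have "AE w in N. \<forall>j::nat. w \<notin> V (I + 1/(real j+1))" by (simp add: AE_all_countable)
  then show ?thesis
  proof (rule AE_mp[OF _ AE_I2[OF impI]])
    fix w assume w: "w \<in> space N" and nV: "\<forall>j::nat. w \<notin> V (I + 1/(real j+1))"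
    show "\<forall>e>0. eventually (\<lambda>n. bsum T g n w \<le> ((\<integral>w. g w \<partial>N) + e) * n) sequentially"
    proof (intro allI impI)
      fix e :: real assume e: "e > 0"
      obtain j :: nat where "inverse (real (Suc j)) < e/2"
        using reals_Archimedean[of "e/2"] e by auto
      then have j: "1 / (real j + 1) < e/2" by (simp add: inverse_eq_divide add.commute)
      have "w \<notin> V (I + 1/(real j+1))" using nV by blast
      then have "\<not> (\<forall>K. \<exists>n\<ge>K. bsum T g n w > (I + 1/(real j+1) + 1/(real j+1)) * n)"
        using w unfolding V_def by blast
      then have "\<exists>K. \<forall>n\<ge>K. bsum T g n w \<le> (I + 1/(real j+1) + 1/(real j+1)) * n"
        by (simp add: not_less)
      then obtain K where K: "\<forall>n\<ge>K. bsum T g n w \<le> (I + 1/(real j+1) + 1/(real j+1)) * n" by blast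
      show "eventually (\<lambda>n. bsum T g n w \<le> ((\<integral>w. g w \<partial>N) + e) * n) sequentially"
        unfolding eventually_sequentially
      proof (intro exI allI impI)
        fix n assume "K \<le> n"
        then have "bsum T g n w \<le> (I + 1/(real j+1) + 1/(real j+1)) * n" using K by blast
        also have "\<dots> \<le> (I + e) * n" using j by (intro mult_right_mono) auto
        finally show "bsum T g n w \<le> ((\<integral>w. g w \<partial>N) + e) * n" unfolding I_def .
      qed
    qed
  qed
qed

lemma birkhoff:
  assumes g[measurable]: "g \<in> borel_measurable N" and g0: "\<And>w. 0 \<le> g w" and g1: "\<And>w. g w \<le> 1"
    and erg: "\<And>S. S \<in> sets N \<Longrightarrow> (\<forall>w\<in>space N. w \<in> S \<longleftrightarrow> T w \<in> S) \<Longrightarrow>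
                measure N S = 0 \<or> measure N S = 1"
  shows "AE w in N. (\<lambda>n. bsum T g n w / n) \<longlonglongrightarrow> (\<integral>w. g w \<partial>N)"
proof -
  define h where "h w = 1 - g w" for w
  have h[measurable]: "h \<in> borel_measurable N" unfolding h_def by measurable
  have h0: "0 \<le> h w" and h1: "h w \<le> 1" for w using g0[of w] g1[of w] by (auto simp: h_def)
  have Ih: "(\<integral>w. h w \<partial>N) = 1 - (\<integral>w. g w \<partial>N)"
  proof -
    have ig: "integrable N g"
      by (rule integrable_const_bound[where B=1]) (use g0 g1 in \<open>auto intro!: AE_I2 simp: abs_le_iff\<close>)
    show ?thesis unfolding h_def using ig by (subst Bochner_Integration.integral_diff) (auto simp: prob_space)
  qed
  have bh: "bsum T h n w = n - bsum T g n w" for n w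
    unfolding bsum_def h_def by (simp add: sum_subtractf)
  define I where "I = (\<integral>w. g w \<partial>N)"
  note U1 = birkhoff_upper[OF g g0 g1 erg]
  note U2 = birkhoff_upper[OF h h0 h1 erg]
  show ?thesis
  proof (rule AE_mp[OF AE_conj_iff[THEN iffD2, OF conjI[OF U1 U2]] AE_I2[OF impI]])
    fix w assume H: "(\<forall>e>0. eventually (\<lambda>n. bsum T g n w \<le> ((\<integral>w. g w \<partial>N) + e) * n) sequentially) \<and>
        (\<forall>e>0. eventually (\<lambda>n. bsum T h n w \<le> ((\<integral>w. h w \<partial>N) + e) * n) sequentially)"
    show "(\<lambda>n. bsum T g n w / n) \<longlonglongrightarrow> (\<integral>w. g w \<partial>N)"
      unfolding tendsto_iff
    proof (intro allI impI)
      fix e :: real assume e: "e > 0"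
      have ev1: "eventually (\<lambda>n. bsum T g n w \<le> (I + e/2) * n) sequentially"
        using H e unfolding I_def by simp
      have ev2: "eventually (\<lambda>n. n - bsum T g n w \<le> (1 - I + e/2) * n) sequentially"
        using H e unfolding I_def Ih bh by simp
      show "eventually (\<lambda>n. dist (bsum T g n w / n) (\<integral>w. g w \<partial>N) < e) sequentially"
        using ev1 ev2 eventually_ge_at_top[of "1::nat"]
      proof eventually_elim
        case (elim n)
        then have np: "real n > 0" by simp
        have a: "bsum T g n w \<le> I * n + (e/2) * n" using elim(1) by (simp add: algebra_simps)
        have b: "I * n - (e/2) * n \<le> bsum T g n w" using elim(2) by (simp add: algebra_simps)
        have "bsum T g n w / n \<le> I + e/2" using a np by (simp add: divide_le_eq algebra_simps)
        moreover have "I - e/2 \<le> bsum T g n w / n" using b np by (simp add: le_divide_eq algebra_simps)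
        ultimately show ?case unfolding I_def dist_real_def using e by (simp add: abs_le_iff)
      qed
    qed
  qed
qed

end




locale kern =
  fixes p :: "'a::euclidean_space \<Rightarrow> 'a \<Rightarrow> real" and \<pi> :: "'a \<Rightarrow> real"
  assumes p_meas: "(\<lambda>(x, y). p x y) \<in> borel_measurable borel"
    and p_pos: "\<And>x y. p x y > 0"
    and p_int: "\<And>x. integrable lborel (\<lambda>y. p x y)"
    and p_norm: "\<And>x. (\<integral>y. p x y \<partial>lborel) = 1"
    and pi_meas[measurable]: "\<pi> \<in> borel_measurable borel"
    and pi_pos: "\<And>x. \<pi> x > 0"
    and pi_int: "integrable lborel \<pi>"
    and pi_norm: "(\<integral>x. \<pi> x \<partial>lborel) = 1"
    and reversible: "\<And>x y. p x y * \<pi> x = p y x * \<pi> y"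
begin

lemma pm[measurable]: "(\<lambda>(x,y). p x y) \<in> borel_measurable (lborel \<Otimes>\<^sub>M lborel)"
proof -
  have "sets (lborel \<Otimes>\<^sub>M lborel) = sets (borel \<Otimes>\<^sub>M borel :: ('a \<times> 'a) measure)"
    by (rule sets_pair_measure_cong) simp_all
  also have "(borel \<Otimes>\<^sub>M borel :: ('a \<times> 'a) measure) = borel" by (rule borel_prod)
  finally have "sets (lborel \<Otimes>\<^sub>M lborel) = sets (borel :: ('a \<times> 'a) measure)" .
  then show ?thesis using p_meas measurable_cong_sets by blast
qed

lemma rho_sym: "\<pi> x * p x y = \<pi> y * p y x"
  using reversible[of x y] by (simp add: mult.commute)

lemma p_bnd_int:
  assumes [measurable]: "f \<in> borel_measurable borel" and b: "\<And>y. \<bar>f y\<bar> \<le> K"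
  shows "integrable lborel (\<lambda>y. p x y * f y)"
proof (rule Bochner_Integration.integrable_bound[of lborel "\<lambda>y. K * p x y"])
  show "integrable lborel (\<lambda>y. K * p x y)" using p_int by simp
  show "AE y in lborel. norm (p x y * f y) \<le> norm (K * p x y)"
  proof (intro AE_I2)
    fix y
    have "\<bar>p x y * f y\<bar> = p x y * \<bar>f y\<bar>" using p_pos[of x y] by (simp add: abs_mult)
    also have "\<dots> \<le> p x y * K" using b[of y] p_pos[of x y] by (intro mult_left_mono) auto
    finally show "norm (p x y * f y) \<le> norm (K * p x y)" by (simp add: mult.commute)
  qed
qed measurable

definition P :: "('a \<Rightarrow> real) \<Rightarrow> 'a \<Rightarrow> real" where
  "P f x = (\<integral>y. p x y * f y \<partial>lborel)"

lemma P_meas[measurable]: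
  assumes [measurable]: "f \<in> borel_measurable borel"
  shows "P f \<in> borel_measurable borel"
proof -
  have "(\<lambda>(x,y). p x y * f y) \<in> borel_measurable (borel \<Otimes>\<^sub>M lborel)" by measurable
  then show ?thesis unfolding P_def by (rule lborel.borel_measurable_lebesgue_integral)
qed

lemma P_bnd:
  assumes [measurable]: "f \<in> borel_measurable borel" and b: "\<And>y. \<bar>f y\<bar> \<le> K"
  shows "\<bar>P f x\<bar> \<le> K"
proof -
  have "\<bar>P f x\<bar> \<le> (\<integral>y. \<bar>p x y * f y\<bar> \<partial>lborel)" unfolding P_def by (rule integral_abs_bound)
  also have "\<dots> \<le> (\<integral>y. K * p x y \<partial>lborel)"
  proof (rule integral_mono)
    show "integrable lborel (\<lambda>y. \<bar>p x y * f y\<bar>)" using p_bnd_int[OF assms] by simp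
    show "integrable lborel (\<lambda>y. K * p x y)" using p_int by simp
    fix y
    have "\<bar>p x y * f y\<bar> = p x y * \<bar>f y\<bar>" using p_pos[of x y] by (simp add: abs_mult)
    also have "\<dots> \<le> p x y * K" using b[of y] p_pos[of x y] by (intro mult_left_mono) auto
    finally show "\<bar>p x y * f y\<bar> \<le> K * p x y" by (simp add: mult.commute)
  qed
  also have "\<dots> = K" using p_norm by simp
  finally show ?thesis .
qed

lemma P_nonneg:
  assumes "\<And>y. 0 \<le> f y" shows "0 \<le> P f x"
  unfolding P_def using p_pos assms by (intro integral_nonneg_AE AE_I2 mult_nonneg_nonneg) (auto intro: less_imp_le)

lemma P_le1:
  assumes [measurable]: "f \<in> borel_measurable borel" and "\<And>y. 0 \<le> f y" "\<And>y. f y \<le> 1"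
  shows "P f x \<le> 1"
  using P_bnd[of f 1 x] assms by (auto simp: abs_le_iff)

lemma rho_integrable: "integrable (lborel \<Otimes>\<^sub>M lborel) (\<lambda>(x,y). \<pi> x * p x y)"
proof (rule lborel_pair.Fubini_integrable)
  show "(\<lambda>(x,y). \<pi> x * p x y) \<in> borel_measurable (lborel \<Otimes>\<^sub>M lborel)" by measurable
  have "(\<integral>y. norm (case (x, y) of (x, y) \<Rightarrow> \<pi> x * p x y) \<partial>lborel) = \<pi> x" for x
  proof -
    have "(\<integral>y. norm (case (x, y) of (x, y) \<Rightarrow> \<pi> x * p x y) \<partial>lborel) = (\<integral>y. \<pi> x * p x y \<partial>lborel)"
      using pi_pos p_pos by (simp add: abs_mult abs_of_pos)
    also have "\<dots> = \<pi> x" using p_norm[of x] by simp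
    finally show ?thesis .
  qed
  then show "integrable lborel (\<lambda>x. \<integral>y. norm (case (x, y) of (x, y) \<Rightarrow> \<pi> x * p x y) \<partial>lborel)"
    using pi_int by simp
  show "AE x in lborel. integrable lborel (\<lambda>y. case (x, y) of (x, y) \<Rightarrow> \<pi> x * p x y)"
    using p_int by simp
qed

lemma rho_bnd_int:
  assumes [measurable]: "(\<lambda>(x,y). G x y) \<in> borel_measurable (lborel \<Otimes>\<^sub>M lborel)"
    and b: "\<And>x y. \<bar>G x y\<bar> \<le> K"
  shows "integrable (lborel \<Otimes>\<^sub>M lborel) (\<lambda>(x,y). \<pi> x * p x y * G x y)"
proof (rule Bochner_Integration.integrable_bound[of _ "\<lambda>(x,y). K * (\<pi> x * p x y)"])
  show "integrable (lborel \<Otimes>\<^sub>M lborel) (\<lambda>(x,y). K * (\<pi> x * p x y))"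
    using integrable_mult_right[OF rho_integrable, of K] by (simp add: split_beta')
  show "(\<lambda>(x,y). \<pi> x * p x y * G x y) \<in> borel_measurable (lborel \<Otimes>\<^sub>M lborel)" by measurable
  show "AE z in lborel \<Otimes>\<^sub>M lborel. norm (case z of (x,y) \<Rightarrow> \<pi> x * p x y * G x y) \<le> norm (case z of (x,y) \<Rightarrow> K * (\<pi> x * p x y))"
  proof (intro AE_I2, clarify)
    fix x y
    have r: "0 < \<pi> x * p x y" using pi_pos p_pos by simp
    have "\<bar>\<pi> x * p x y * G x y\<bar> = (\<pi> x * p x y) * \<bar>G x y\<bar>" by (simp only: abs_mult[of "\<pi> x * p x y"] abs_of_pos[OF r])
    also have "\<dots> \<le> (\<pi> x * p x y) * K" using r b[of x y] by (intro mult_left_mono) auto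
    finally show "norm (\<pi> x * p x y * G x y) \<le> norm (K * (\<pi> x * p x y))" by (simp add: mult.commute)
  qed
qed

lemma fub_swap:
  fixes F :: "'a \<Rightarrow> 'a \<Rightarrow> real"
  assumes "integrable (lborel \<Otimes>\<^sub>M lborel) (\<lambda>(x,y). F x y)"
  shows "(\<integral>x. (\<integral>y. F x y \<partial>lborel) \<partial>lborel) = (\<integral>y. (\<integral>x. F x y \<partial>lborel) \<partial>lborel)"
  using lborel_pair.integral_fst[OF assms] lborel_pair.integral_snd[OF assms] by simp

lemma invariance:
  assumes [measurable]: "\<psi> \<in> borel_measurable borel" and b: "\<And>y. \<bar>\<psi> y\<bar> \<le> K"
  shows "(\<integral>x. \<pi> x * P \<psi> x \<partial>lborel) = (\<integral>y. \<pi> y * \<psi> y \<partial>lborel)"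
proof -
  have int: "integrable (lborel \<Otimes>\<^sub>M lborel) (\<lambda>(x,y). \<pi> x * p x y * \<psi> y)"
    by (rule rho_bnd_int[where K=K]) (use b in auto)
  have "(\<integral>x. \<pi> x * P \<psi> x \<partial>lborel) = (\<integral>x. (\<integral>y. \<pi> x * p x y * \<psi> y \<partial>lborel) \<partial>lborel)"
    unfolding P_def by (simp add: mult.assoc)
  also have "\<dots> = (\<integral>y. (\<integral>x. \<pi> x * p x y * \<psi> y \<partial>lborel) \<partial>lborel)"
    by (rule fub_swap) (use int in simp)
  also have "\<dots> = (\<integral>y. (\<integral>x. \<pi> y * \<psi> y * p y x \<partial>lborel) \<partial>lborel)"
    by (simp add: rho_sym mult_ac)
  also have "\<dots> = (\<integral>y. \<pi> y * \<psi> y \<partial>lborel)" using p_norm by simp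
  finally show ?thesis .
qed

definition L2 :: "('a \<Rightarrow> real) \<Rightarrow> bool" where
  "L2 g \<longleftrightarrow> g \<in> borel_measurable borel \<and> integrable lborel (\<lambda>x. \<pi> x * (g x)^2)"

lemma L2_x:
  assumes "L2 g"
  shows "integrable (lborel \<Otimes>\<^sub>M lborel) (\<lambda>(x,y). \<pi> x * p x y * (g x)^2)"
proof (rule lborel_pair.Fubini_integrable)
  have [measurable]: "g \<in> borel_measurable borel" using assms by (simp add: L2_def)
  show "(\<lambda>(x,y). \<pi> x * p x y * (g x)^2) \<in> borel_measurable (lborel \<Otimes>\<^sub>M lborel)" by measurable
  have "(\<integral>y. norm (case (x, y) of (x, y) \<Rightarrow> \<pi> x * p x y * (g x)^2) \<partial>lborel) = \<pi> x * (g x)^2" for x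
  proof -
    have "(\<integral>y. norm (case (x, y) of (x, y) \<Rightarrow> \<pi> x * p x y * (g x)^2) \<partial>lborel) = (\<integral>y. (\<pi> x * (g x)^2) * p x y \<partial>lborel)"
      using pi_pos p_pos by (simp add: abs_mult abs_of_pos mult_ac)
    also have "\<dots> = \<pi> x * (g x)^2" using p_norm[of x] by simp
    finally show ?thesis .
  qed
  then show "integrable lborel (\<lambda>x. \<integral>y. norm (case (x, y) of (x, y) \<Rightarrow> \<pi> x * p x y * (g x)^2) \<partial>lborel)"
    using assms by (simp add: L2_def)
  show "AE x in lborel. integrable lborel (\<lambda>y. case (x, y) of (x, y) \<Rightarrow> \<pi> x * p x y * (g x)^2)"
    using p_int by (simp add: mult.commute[of _ "(g _)^2"] mult.assoc[symmetric])
qed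

lemma L2_y:
  assumes "L2 g"
  shows "integrable (lborel \<Otimes>\<^sub>M lborel) (\<lambda>(x,y). \<pi> x * p x y * (g y)^2)"
proof -
  have "integrable (lborel \<Otimes>\<^sub>M lborel) (\<lambda>(x,y). (\<lambda>(x,y). \<pi> x * p x y * (g x)^2) (y, x))"
    by (rule lborel_pair.integrable_product_swap[OF L2_x[OF assms]])
  then show ?thesis by (simp add: rho_sym)
qed

lemma L2_meas: "L2 g \<Longrightarrow> g \<in> borel_measurable borel" by (simp add: L2_def)

lemma L2_mix:
  assumes h: "L2 h" and [measurable]: "(\<lambda>(x,y). G x y) \<in> borel_measurable (lborel \<Otimes>\<^sub>M lborel)"
    and b: "\<And>x y. \<bar>G x y\<bar> \<le> 1"
  shows "integrable (lborel \<Otimes>\<^sub>M lborel) (\<lambda>(x,y). \<pi> x * p x y * (G x y * h x))"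
    and "integrable (lborel \<Otimes>\<^sub>M lborel) (\<lambda>(x,y). \<pi> x * p x y * (G x y * h y))"
proof -
  have [measurable]: "h \<in> borel_measurable borel" using h by (simp add: L2_def)
  have key: "\<bar>\<pi> x * p x y * (G x y * t)\<bar> \<le> \<pi> x * p x y + \<pi> x * p x y * t^2" for x y t
  proof -
    have r: "0 < \<pi> x * p x y" using pi_pos p_pos by simp
    have "\<bar>G x y * t\<bar> \<le> \<bar>t\<bar>" using b[of x y] by (simp add: abs_mult mult_left_le_one_le)
    also have "\<bar>t\<bar> \<le> 1 + t^2"
    proof -
      have "0 \<le> (\<bar>t\<bar> - 1)^2" by simp
      then have "2*\<bar>t\<bar> \<le> \<bar>t\<bar>^2 + 1" by (simp add: power2_eq_square algebra_simps)
      then show ?thesis by simp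
    qed
    finally have "\<bar>G x y * t\<bar> \<le> 1 + t^2" .
    then have "(\<pi> x * p x y) * \<bar>G x y * t\<bar> \<le> (\<pi> x * p x y) * (1 + t^2)" using r by (intro mult_left_mono) auto
    then show ?thesis by (simp only: abs_mult[of "\<pi> x * p x y"] abs_of_pos[OF r]) (simp add: algebra_simps)
  qed
  show "integrable (lborel \<Otimes>\<^sub>M lborel) (\<lambda>(x,y). \<pi> x * p x y * (G x y * h x))"
  proof (rule Bochner_Integration.integrable_bound[of _ "\<lambda>(x,y). \<pi> x * p x y + \<pi> x * p x y * (h x)^2"])
    show "integrable (lborel \<Otimes>\<^sub>M lborel) (\<lambda>(x,y). \<pi> x * p x y + \<pi> x * p x y * (h x)^2)"
      using Bochner_Integration.integrable_add[OF rho_integrable L2_x[OF h]] by (simp add: split_beta')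
    show "AE z in lborel \<Otimes>\<^sub>M lborel. norm (case z of (x,y) \<Rightarrow> \<pi> x * p x y * (G x y * h x)) \<le> norm (case z of (x,y) \<Rightarrow> \<pi> x * p x y + \<pi> x * p x y * (h x)^2)"
    proof (intro AE_I2, clarify)
      fix x y
      have r: "0 < \<pi> x * p x y" using pi_pos p_pos by simp
      have "0 \<le> \<pi> x * p x y + \<pi> x * p x y * (h x)^2" using r by (intro add_nonneg_nonneg) auto
      then show "norm (\<pi> x * p x y * (G x y * h x)) \<le> norm (\<pi> x * p x y + \<pi> x * p x y * (h x)^2)"
        using key[of x y "h x"] by simp
    qed
  qed measurable
  show "integrable (lborel \<Otimes>\<^sub>M lborel) (\<lambda>(x,y). \<pi> x * p x y * (G x y * h y))"
  proof (rule Bochner_Integration.integrable_bound[of _ "\<lambda>(x,y). \<pi> x * p x y + \<pi> x * p x y * (h y)^2"])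
    show "integrable (lborel \<Otimes>\<^sub>M lborel) (\<lambda>(x,y). \<pi> x * p x y + \<pi> x * p x y * (h y)^2)"
      using Bochner_Integration.integrable_add[OF rho_integrable L2_y[OF h]] by (simp add: split_beta')
    show "AE z in lborel \<Otimes>\<^sub>M lborel. norm (case z of (x,y) \<Rightarrow> \<pi> x * p x y * (G x y * h y)) \<le> norm (case z of (x,y) \<Rightarrow> \<pi> x * p x y + \<pi> x * p x y * (h y)^2)"
    proof (intro AE_I2, clarify)
      fix x y
      have r: "0 < \<pi> x * p x y" using pi_pos p_pos by simp
      have "0 \<le> \<pi> x * p x y + \<pi> x * p x y * (h y)^2" using r by (intro add_nonneg_nonneg) auto
      then show "norm (\<pi> x * p x y * (G x y * h y)) \<le> norm (\<pi> x * p x y + \<pi> x * p x y * (h y)^2)"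
        using key[of x y "h y"] by simp
    qed
  qed measurable
qed

lemma energy_int:
  assumes g: "L2 g"
  shows "integrable (lborel \<Otimes>\<^sub>M lborel) (\<lambda>(x,y). \<pi> x * p x y * (g y - g x)^2)"
proof (rule Bochner_Integration.integrable_bound[of _ "\<lambda>(x,y). 2 * (\<pi> x * p x y * (g x)^2) + 2 * (\<pi> x * p x y * (g y)^2)"])
  have [measurable]: "g \<in> borel_measurable borel" using g by (simp add: L2_def)
  show "integrable (lborel \<Otimes>\<^sub>M lborel) (\<lambda>(x,y). 2 * (\<pi> x * p x y * (g x)^2) + 2 * (\<pi> x * p x y * (g y)^2))"
    using Bochner_Integration.integrable_add[OF integrable_mult_right[OF L2_x[OF g], of 2] integrable_mult_right[OF L2_y[OF g], of 2]]
    by (simp add: split_beta')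
  show "(\<lambda>(x,y). \<pi> x * p x y * (g y - g x)^2) \<in> borel_measurable (lborel \<Otimes>\<^sub>M lborel)" by measurable
  show "AE z in lborel \<Otimes>\<^sub>M lborel. norm (case z of (x,y) \<Rightarrow> \<pi> x * p x y * (g y - g x)^2) \<le> norm (case z of (x,y) \<Rightarrow> 2 * (\<pi> x * p x y * (g x)^2) + 2 * (\<pi> x * p x y * (g y)^2))"
  proof (intro AE_I2, clarify)
    fix x y
    have r: "0 < \<pi> x * p x y" using pi_pos p_pos by simp
    have sq: "(g y - g x)^2 \<le> 2 * (g x)^2 + 2 * (g y)^2"
      using sum_squares_ge_zero[of "g x + g y" 0] by (simp add: power2_eq_square algebra_simps)
    have "(\<pi> x * p x y) * (g y - g x)^2 \<le> (\<pi> x * p x y) * (2 * (g x)^2 + 2 * (g y)^2)"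
      using r sq by (intro mult_left_mono) auto
    moreover have "0 \<le> (\<pi> x * p x y) * (g y - g x)^2" using r by simp
    ultimately show "norm (\<pi> x * p x y * (g y - g x)^2) \<le> norm (2 * (\<pi> x * p x y * (g x)^2) + 2 * (\<pi> x * p x y * (g y)^2))"
      by (simp add: algebra_simps)
  qed
qed

lemma energy_formula:
  assumes g: "L2 g"
  shows "dirichlet_energy p \<pi> g = 1/2 * (\<integral>z. (case z of (x,y) \<Rightarrow> \<pi> x * p x y * (g y - g x)^2) \<partial>(lborel \<Otimes>\<^sub>M lborel))"
proof -
  have [measurable]: "g \<in> borel_measurable borel" using g by (simp add: L2_def)
  have m: "(\<lambda>x. \<integral>y. (g y - g x)^2 * p x y \<partial>lborel) \<in> borel_measurable borel"
    by (rule lborel.borel_measurable_lebesgue_integral) measurable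
  have "(\<integral>x. (\<integral>y. (g y - g x)^2 * p x y \<partial>lborel) \<partial>(density lborel (\<lambda>x. ennreal (\<pi> x))))
      = (\<integral>x. \<pi> x * (\<integral>y. (g y - g x)^2 * p x y \<partial>lborel) \<partial>lborel)"
    using integral_density[of "\<lambda>x. \<integral>y. (g y - g x)^2 * p x y \<partial>lborel" lborel \<pi>] m pi_pos
    by (simp add: less_imp_le)
  also have "\<dots> = (\<integral>x. (\<integral>y. \<pi> x * p x y * (g y - g x)^2 \<partial>lborel) \<partial>lborel)"
    by (simp add: mult_ac)
  also have "\<dots> = (\<integral>z. (case z of (x,y) \<Rightarrow> \<pi> x * p x y * (g y - g x)^2) \<partial>(lborel \<Otimes>\<^sub>M lborel))"
    using lborel_pair.integral_fst[OF energy_int[OF g]] by simp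
  finally show ?thesis unfolding dirichlet_energy_def by simp
qed

lemma anti:
  fixes u v :: "'a \<Rightarrow> real"
  assumes i1: "integrable (lborel \<Otimes>\<^sub>M lborel) (\<lambda>(x,y). \<pi> x * p x y * ((u y - u x) * v y))"
    and i2: "integrable (lborel \<Otimes>\<^sub>M lborel) (\<lambda>(x,y). \<pi> x * p x y * ((u y - u x) * v x))"
  shows "(\<integral>z. (case z of (x,y) \<Rightarrow> \<pi> x * p x y * ((u y - u x) * v y)) \<partial>(lborel \<Otimes>\<^sub>M lborel))
       = - (\<integral>z. (case z of (x,y) \<Rightarrow> \<pi> x * p x y * ((u y - u x) * v x)) \<partial>(lborel \<Otimes>\<^sub>M lborel))"
proof -
  have "(\<integral>z. (case z of (x,y) \<Rightarrow> \<pi> x * p x y * ((u y - u x) * v y)) \<partial>(lborel \<Otimes>\<^sub>M lborel))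
      = (\<integral>y. (\<integral>x. \<pi> x * p x y * ((u y - u x) * v y) \<partial>lborel) \<partial>lborel)"
    using lborel_pair.integral_snd[OF i1] by simp
  also have "\<dots> = (\<integral>y. (\<integral>x. - (\<pi> y * p y x * ((u x - u y) * v y)) \<partial>lborel) \<partial>lborel)"
    by (simp add: rho_sym algebra_simps)
  also have "\<dots> = - (\<integral>y. (\<integral>x. \<pi> y * p y x * ((u x - u y) * v y) \<partial>lborel) \<partial>lborel)"
    by simp
  also have "(\<integral>y. (\<integral>x. \<pi> y * p y x * ((u x - u y) * v y) \<partial>lborel) \<partial>lborel)
      = (\<integral>z. (case z of (x,y) \<Rightarrow> \<pi> x * p x y * ((u y - u x) * v x)) \<partial>(lborel \<Otimes>\<^sub>M lborel))"
    using lborel_pair.integral_fst[OF i2] by simp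
  finally show ?thesis .
qed

lemma half:
  assumes [measurable]: "u \<in> borel_measurable borel" and b: "\<And>y. \<bar>u y\<bar> \<le> K"
    and i: "integrable (lborel \<Otimes>\<^sub>M lborel) (\<lambda>(x,y). \<pi> x * p x y * ((u y - u x) * v x))"
  shows "(\<integral>z. (case z of (x,y) \<Rightarrow> \<pi> x * p x y * ((u y - u x) * v x)) \<partial>(lborel \<Otimes>\<^sub>M lborel))
       = (\<integral>x. \<pi> x * v x * (P u x - u x) \<partial>lborel)"
proof -
  have inner: "(\<integral>y. \<pi> x * p x y * ((u y - u x) * v x) \<partial>lborel) = \<pi> x * v x * (P u x - u x)" for x
  proof -
    have "(\<integral>y. \<pi> x * p x y * ((u y - u x) * v x) \<partial>lborel)
        = (\<integral>y. (\<pi> x * v x) * (p x y * u y - u x * p x y) \<partial>lborel)"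
      by (simp add: algebra_simps)
    also have "\<dots> = (\<pi> x * v x) * ((\<integral>y. p x y * u y \<partial>lborel) - (\<integral>y. u x * p x y \<partial>lborel))"
      using p_bnd_int[OF assms(1) b, of x] p_int[of x] by (simp add: Bochner_Integration.integral_diff)
    also have "\<dots> = \<pi> x * v x * (P u x - u x)" using p_norm[of x] by (simp add: P_def)
    finally show ?thesis .
  qed
  show ?thesis using lborel_pair.integral_fst[OF i] inner by simp
qed

lemma pi_bnd_int:
  assumes [measurable]: "f \<in> borel_measurable borel" and b: "\<And>x. \<bar>f x\<bar> \<le> K"
  shows "integrable lborel (\<lambda>x. \<pi> x * f x)"
proof (rule Bochner_Integration.integrable_bound[of lborel "\<lambda>x. K * \<pi> x"])
  show "integrable lborel (\<lambda>x. K * \<pi> x)" using pi_int by simp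
  show "AE x in lborel. norm (\<pi> x * f x) \<le> norm (K * \<pi> x)"
  proof (intro AE_I2)
    fix x
    have "\<bar>\<pi> x * f x\<bar> = \<pi> x * \<bar>f x\<bar>" using pi_pos[of x] by (simp add: abs_mult)
    also have "\<dots> \<le> \<pi> x * K" using b[of x] pi_pos[of x] by (intro mult_left_mono) auto
    finally show "norm (\<pi> x * f x) \<le> norm (K * \<pi> x)" by (simp add: mult.commute)
  qed
qed measurable

lemma L2_bnd:
  assumes [measurable]: "f \<in> borel_measurable borel" and b: "\<And>x. \<bar>f x\<bar> \<le> K"
  shows "L2 f"
proof -
  have "\<bar>(f x)^2\<bar> \<le> K^2" for x using b[of x] by (metis abs_ge_zero power2_abs power_mono abs_power2)
  then have "integrable lborel (\<lambda>x. \<pi> x * (f x)^2)" by (intro pi_bnd_int[where K="K^2"]) auto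
  then show ?thesis unfolding L2_def by simp
qed

lemma L2_diff:
  assumes f: "L2 f" and g: "L2 g" shows "L2 (\<lambda>x. f x - g x)"
proof -
  have [measurable]: "f \<in> borel_measurable borel" "g \<in> borel_measurable borel" using f g by (auto simp: L2_def)
  have "integrable lborel (\<lambda>x. \<pi> x * (f x - g x)^2)"
  proof (rule Bochner_Integration.integrable_bound[of lborel "\<lambda>x. 2 * (\<pi> x * (f x)^2) + 2 * (\<pi> x * (g x)^2)"])
    show "integrable lborel (\<lambda>x. 2 * (\<pi> x * (f x)^2) + 2 * (\<pi> x * (g x)^2))"
      using f g by (auto simp: L2_def)
    show "AE x in lborel. norm (\<pi> x * (f x - g x)^2) \<le> norm (2 * (\<pi> x * (f x)^2) + 2 * (\<pi> x * (g x)^2))"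
    proof (intro AE_I2)
      fix x
      have r: "0 < \<pi> x" using pi_pos by simp
      have sq: "(f x - g x)^2 \<le> 2 * (f x)^2 + 2 * (g x)^2"
        using sum_squares_ge_zero[of "f x + g x" 0] by (simp add: power2_eq_square algebra_simps)
      have "\<pi> x * (f x - g x)^2 \<le> \<pi> x * (2 * (f x)^2 + 2 * (g x)^2)" using r sq by (intro mult_left_mono) auto
      moreover have "0 \<le> \<pi> x * (f x - g x)^2" using r by simp
      ultimately show "norm (\<pi> x * (f x - g x)^2) \<le> norm (2 * (\<pi> x * (f x)^2) + 2 * (\<pi> x * (g x)^2))"
        by (simp add: algebra_simps)
    qed
  qed measurable
  moreover have "(\<lambda>x. f x - g x) \<in> borel_measurable borel" by measurable
  ultimately show ?thesis unfolding L2_def by simp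
qed


lemma path_int_Cons_P: "path_int p (S # Ss) x = P (\<lambda>y. indicator S y * path_int p Ss y) x"
  by (simp add: P_def mult_ac)

lemma path_int_meas[measurable]:
  "set Ss \<subseteq> sets borel \<Longrightarrow> path_int p Ss \<in> borel_measurable borel"
proof (induction Ss)
  case Nil then show ?case by simp
next
  case (Cons S Ss)
  then have [measurable]: "S \<in> sets borel" "path_int p Ss \<in> borel_measurable borel" by auto
  show ?case unfolding path_int_Cons_P[abs_def] by measurable
qed

lemma path_int_01: "set Ss \<subseteq> sets borel \<Longrightarrow> 0 \<le> path_int p Ss x \<and> path_int p Ss x \<le> 1"
proof (induction Ss arbitrary: x)
  case Nil then show ?case by simp
next
  case (Cons S Ss)
  then have [measurable]: "S \<in> sets borel" "path_int p Ss \<in> borel_measurable borel" by auto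
  have b: "0 \<le> indicator S y * path_int p Ss y \<and> indicator S y * path_int p Ss y \<le> 1" for y
    using Cons by (auto simp: indicator_def)
  show ?case unfolding path_int_Cons_P
    using P_nonneg[of "\<lambda>y. indicator S y * path_int p Ss y" x] P_le1[of "\<lambda>y. indicator S y * path_int p Ss y" x] b
    by auto
qed

lemma path_int_bnd: "set Ss \<subseteq> sets borel \<Longrightarrow> \<bar>path_int p Ss x\<bar> \<le> 1"
  using path_int_01[of Ss x] by simp

end

locale kernAB = kern p \<pi> for p :: "'a::euclidean_space \<Rightarrow> 'a \<Rightarrow> real" and \<pi> +
  fixes A B :: "'a set"
  assumes A_meas[measurable]: "A \<in> sets borel" and B_meas[measurable]: "B \<in> sets borel"
    and disj: "A \<inter> B = {}"
begin

abbreviation "hb n \<equiv> hit_before p A B n"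
abbreviation "q \<equiv> committor p A B"

lemma hb_Suc_P: "hb (Suc n) x = (if x \<in> B then 1 else if x \<in> A then 0 else P (hb n) x)"
  by (simp add: P_def)

lemma hb_meas[measurable]: "hb n \<in> borel_measurable borel"
proof (induction n)
  case 0 then show ?case by simp
next
  case (Suc n)
  note Suc[measurable]
  show ?case unfolding hb_Suc_P by measurable
qed

lemma hb_01: "0 \<le> hb n x \<and> hb n x \<le> 1"
proof (induction n arbitrary: x)
  case 0 then show ?case by simp
next
  case (Suc n)
  then show ?case unfolding hb_Suc_P using P_nonneg[of "hb n" x] P_le1[of "hb n" x] by auto
qed

lemma hb_bnd: "\<bar>hb n x\<bar> \<le> 1" using hb_01[of n x] by simp

lemma hb_mono: "hb n x \<le> hb (Suc n) x"
proof (induction n arbitrary: x)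
  case 0
  have "0 \<le> P (hb 0) x" by (rule P_nonneg) simp
  then show ?case by (simp only: hb_Suc_P) auto
next
  case (Suc n)
  have "P (hb n) x \<le> P (hb (Suc n)) x"
    unfolding P_def
  proof (rule integral_mono)
    show "integrable lborel (\<lambda>y. p x y * hb n y)" by (rule p_bnd_int[OF hb_meas hb_bnd])
    show "integrable lborel (\<lambda>y. p x y * hb (Suc n) y)" by (rule p_bnd_int[OF hb_meas hb_bnd])
    fix y show "p x y * hb n y \<le> p x y * hb (Suc n) y" using Suc p_pos[of x y] by (intro mult_left_mono) auto
  qed
  then show ?case by (simp only: hb_Suc_P) auto
qed

lemma hb_inc: "incseq (\<lambda>n. hb n x)"
  by (rule incseq_SucI) (rule hb_mono)

lemma q_lim: "(\<lambda>n. hb n x) \<longlonglongrightarrow> q x"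
proof -
  have "(\<lambda>n. hb n x) \<longlonglongrightarrow> (SUP n. hb n x)"
    by (rule LIMSEQ_incseq_SUP) (auto simp: bdd_above_def hb_inc intro!: exI[of _ 1] hb_01[THEN conjunct2])
  then show ?thesis unfolding committor_def using limI by (metis)
qed

lemma q_01: "0 \<le> q x \<and> q x \<le> 1"
proof -
  have "0 \<le> q x" by (rule LIMSEQ_le_const[OF q_lim]) (auto simp: hb_01)
  moreover have "q x \<le> 1" by (rule LIMSEQ_le_const2[OF q_lim]) (auto simp: hb_01)
  ultimately show ?thesis by simp
qed

lemma q_bnd: "\<bar>q x\<bar> \<le> 1" using q_01[of x] by simp

lemma q_meas[measurable]: "q \<in> borel_measurable borel"
  by (rule borel_measurable_LIMSEQ_real[OF q_lim hb_meas])

lemma q_A: "x \<in> A \<Longrightarrow> q x = 0"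
proof -
  assume x: "x \<in> A"
  then have "x \<notin> B" using disj by auto
  have "hb n x = 0" for n using x \<open>x \<notin> B\<close> by (cases n) auto
  then show ?thesis using LIMSEQ_unique[OF q_lim, of x 0] by simp
qed

lemma q_B: "x \<in> B \<Longrightarrow> q x = 1"
proof -
  assume x: "x \<in> B"
  have "hb n x = 1" for n using x by (cases n) auto
  then show ?thesis using LIMSEQ_unique[OF q_lim, of x 1] by simp
qed

lemma Pq_lim: "(\<lambda>n. P (hb n) x) \<longlonglongrightarrow> P q x"
  unfolding P_def
proof (rule integral_dominated_convergence[where w="\<lambda>y. p x y"])
  show "AE y in lborel. (\<lambda>n. p x y * hb n y) \<longlonglongrightarrow> p x y * q y"
    by (intro AE_I2 tendsto_mult tendsto_const q_lim)
  show "AE y in lborel. norm (p x y * hb n y) \<le> p x y" for n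
  proof (intro AE_I2)
    fix y
    have "\<bar>p x y * hb n y\<bar> = p x y * \<bar>hb n y\<bar>" using p_pos[of x y] by (simp add: abs_mult)
    also have "\<dots> \<le> p x y * 1" using hb_bnd[of n y] p_pos[of x y] by (intro mult_left_mono) auto
    finally show "norm (p x y * hb n y) \<le> p x y" by simp
  qed
qed (use p_int in auto)

lemma q_harm: "x \<notin> A \<Longrightarrow> x \<notin> B \<Longrightarrow> q x = P q x"
proof -
  assume x: "x \<notin> A" "x \<notin> B"
  have "(\<lambda>n. hb (Suc n) x) \<longlonglongrightarrow> P q x" using Pq_lim[of x] x by (simp add: P_def)
  moreover have "(\<lambda>n. hb (Suc n) x) \<longlonglongrightarrow> q x" using LIMSEQ_Suc[OF q_lim] .
  ultimately show ?thesis using LIMSEQ_unique by blast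
qed

definition II :: "('a \<Rightarrow> 'a \<Rightarrow> real) \<Rightarrow> real" where
  "II F = (\<integral>z. (case z of (x,y) \<Rightarrow> \<pi> x * p x y * F x y) \<partial>(lborel \<Otimes>\<^sub>M lborel))"

definition IN :: "('a \<Rightarrow> 'a \<Rightarrow> real) \<Rightarrow> bool" where
  "IN F \<longleftrightarrow> integrable (lborel \<Otimes>\<^sub>M lborel) (\<lambda>(x,y). \<pi> x * p x y * F x y)"

lemma II_add: "IN F \<Longrightarrow> IN G \<Longrightarrow> II (\<lambda>x y. F x y + G x y) = II F + II G"
  unfolding II_def IN_def split_beta' distrib_left by (rule Bochner_Integration.integral_add)

lemma II_diff: "IN F \<Longrightarrow> IN G \<Longrightarrow> II (\<lambda>x y. F x y - G x y) = II F - II G"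
  unfolding II_def IN_def split_beta' right_diff_distrib by (rule Bochner_Integration.integral_diff)

lemma II_cmult: "II (\<lambda>x y. c * F x y) = c * II F"
  unfolding II_def split_beta' by (simp add: mult_ac)

lemma IN_add: "IN F \<Longrightarrow> IN G \<Longrightarrow> IN (\<lambda>x y. F x y + G x y)"
  unfolding IN_def split_beta' distrib_left by (rule Bochner_Integration.integrable_add)

lemma IN_diff: "IN F \<Longrightarrow> IN G \<Longrightarrow> IN (\<lambda>x y. F x y - G x y)"
  unfolding IN_def split_beta' right_diff_distrib by (rule Bochner_Integration.integrable_diff)

lemma IN_cmult: "IN F \<Longrightarrow> IN (\<lambda>x y. c * F x y)"
proof -
  assume "IN F"
  then have "integrable (lborel \<Otimes>\<^sub>M lborel) (\<lambda>z. c * (\<pi> (fst z) * p (fst z) (snd z) * F (fst z) (snd z)))"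
    unfolding IN_def split_beta' by (rule integrable_mult_right)
  then show ?thesis unfolding IN_def split_beta' by (simp add: mult_ac)
qed

lemma II_cong: "(\<And>x y. F x y = G x y) \<Longrightarrow> II F = II G"
  unfolding II_def by simp

lemma q_diff_bnd: "\<bar>(q y - q x) * c\<bar> \<le> 1" if "\<bar>c\<bar> \<le> 1" for x y c
proof -
  have "\<bar>q y - q x\<bar> \<le> 1" using q_01[of x] q_01[of y] by linarith
  then have "\<bar>q y - q x\<bar> * \<bar>c\<bar> \<le> 1 * 1" using that by (intro mult_mono) auto
  then show ?thesis by (simp add: abs_mult)
qed

lemma q_diff_bnd1: "\<bar>q y - q x\<bar> \<le> 1" for x y
  using q_diff_bnd[of 1 y x] by simp

lemma IN_q1: "IN (\<lambda>x y. (q y - q x) * q y)"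
  unfolding IN_def by (rule rho_bnd_int[where K=1]) (auto intro!: q_diff_bnd q_bnd)

lemma IN_q2: "IN (\<lambda>x y. (q y - q x) * q x)"
  unfolding IN_def by (rule rho_bnd_int[where K=1]) (auto intro!: q_diff_bnd q_bnd)

lemma Pq_bnd: "\<bar>P q x\<bar> \<le> 1" by (rule P_bnd[OF q_meas q_bnd])

lemma E_q_B: "dirichlet_energy p \<pi> q = (\<integral>x. \<pi> x * (indicator B x * (1 - P q x)) \<partial>lborel)"
proof -
  have L: "L2 q" by (rule L2_bnd[OF q_meas q_bnd])
  have "dirichlet_energy p \<pi> q = 1/2 * II (\<lambda>x y. (q y - q x)^2)"
    unfolding II_def using energy_formula[OF L] by simp
  also have "II (\<lambda>x y. (q y - q x)^2) = II (\<lambda>x y. (q y - q x) * q y - (q y - q x) * q x)"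
    by (rule II_cong) (simp add: power2_eq_square algebra_simps)
  also have "\<dots> = II (\<lambda>x y. (q y - q x) * q y) - II (\<lambda>x y. (q y - q x) * q x)"
    by (rule II_diff[OF IN_q1 IN_q2])
  also have "II (\<lambda>x y. (q y - q x) * q y) = - II (\<lambda>x y. (q y - q x) * q x)"
    using anti[of q q] IN_q1 IN_q2 unfolding II_def IN_def by simp
  also have "II (\<lambda>x y. (q y - q x) * q x) = (\<integral>x. \<pi> x * q x * (P q x - q x) \<partial>lborel)"
    using half[OF q_meas q_bnd, of q] IN_q2 unfolding II_def IN_def by simp
  also have "\<dots> = (\<integral>x. - (\<pi> x * (indicator B x * (1 - P q x))) \<partial>lborel)"
  proof (rule Bochner_Integration.integral_cong[OF refl])
    fix x
    show "\<pi> x * q x * (P q x - q x) = - (\<pi> x * (indicator B x * (1 - P q x)))"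
    proof (cases "x \<in> B")
      case True then show ?thesis using q_B by (simp add: algebra_simps)
    next
      case False
      then show ?thesis
      proof (cases "x \<in> A")
        case True then show ?thesis using q_A False by simp
      next
        case False2: False
        then show ?thesis using q_harm[of x] False by simp
      qed
    qed
  qed
  finally show ?thesis by simp
qed

lemma E_q:
  "dirichlet_energy p \<pi> q = (\<integral>x. indicator A x * \<pi> x * P q x \<partial>lborel)"
proof -
  have i1: "integrable lborel (\<lambda>x. \<pi> x * (indicator A x * P q x))"
    by (rule pi_bnd_int[where K=1]) (auto simp: indicator_def Pq_bnd)
  have i2: "integrable lborel (\<lambda>x. \<pi> x * (indicator B x * (1 - P q x)))"
  proof (rule pi_bnd_int[where K=1])
    fix x show "\<bar>indicator B x * (1 - P q x)\<bar> \<le> 1"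
      using P_nonneg[of q x] P_le1[OF q_meas, of x] q_01 by (auto simp: indicator_def)
  qed measurable
  have inv: "(\<integral>x. \<pi> x * P q x \<partial>lborel) = (\<integral>x. \<pi> x * q x \<partial>lborel)"
    by (rule invariance[OF q_meas q_bnd])
  have "(\<integral>x. \<pi> x * P q x \<partial>lborel) - (\<integral>x. \<pi> x * q x \<partial>lborel)
      = (\<integral>x. \<pi> x * P q x - \<pi> x * q x \<partial>lborel)"
    by (rule Bochner_Integration.integral_diff[symmetric])
       (auto intro!: pi_bnd_int[where K=1] Pq_bnd q_bnd)
  also have "\<dots> = (\<integral>x. \<pi> x * (indicator A x * P q x) - \<pi> x * (indicator B x * (1 - P q x)) \<partial>lborel)"
  proof (rule Bochner_Integration.integral_cong[OF refl])
    fix x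
    show "\<pi> x * P q x - \<pi> x * q x = \<pi> x * (indicator A x * P q x) - \<pi> x * (indicator B x * (1 - P q x))"
    proof (cases "x \<in> B")
      case True then show ?thesis using q_B disj by (auto simp: algebra_simps indicator_def)
    next
      case False
      then show ?thesis
      proof (cases "x \<in> A")
        case True then show ?thesis using q_A False by simp
      next
        case False2: False
        then show ?thesis using q_harm[of x] False by simp
      qed
    qed
  qed
  also have "\<dots> = (\<integral>x. \<pi> x * (indicator A x * P q x) \<partial>lborel) - (\<integral>x. \<pi> x * (indicator B x * (1 - P q x)) \<partial>lborel)"
    by (rule Bochner_Integration.integral_diff[OF i1 i2])
  finally have "(\<integral>x. \<pi> x * (indicator A x * P q x) \<partial>lborel) = (\<integral>x. \<pi> x * (indicator B x * (1 - P q x)) \<partial>lborel)"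
    using inv by simp
  then show ?thesis using E_q_B by (simp add: mult_ac)
qed

lemma E_decomp:
  assumes f: "L2 f" and fA: "\<forall>x\<in>A. f x = 0" and fB: "\<forall>x\<in>B. f x = 1"
  shows "dirichlet_energy p \<pi> f = dirichlet_energy p \<pi> q + dirichlet_energy p \<pi> (\<lambda>x. f x - q x)"
proof -
  define h where "h x = f x - q x" for x
  have Lq: "L2 q" by (rule L2_bnd[OF q_meas q_bnd])
  have Lh: "L2 h" unfolding h_def by (rule L2_diff[OF f Lq])
  have [measurable]: "h \<in> borel_measurable borel" using Lh by (simp add: L2_def)
  have Gm: "(\<lambda>(x,y). q y - q x) \<in> borel_measurable (lborel \<Otimes>\<^sub>M lborel)" by measurable
  have c1: "IN (\<lambda>x y. (q y - q x) * h x)" using L2_mix(1)[OF Lh Gm q_diff_bnd1] unfolding IN_def .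
  have c2: "IN (\<lambda>x y. (q y - q x) * h y)" using L2_mix(2)[OF Lh Gm q_diff_bnd1] unfolding IN_def .
  have Iq: "IN (\<lambda>x y. (q y - q x)^2)" using energy_int[OF Lq] unfolding IN_def .
  have Ih: "IN (\<lambda>x y. (h y - h x)^2)" using energy_int[OF Lh] unfolding IN_def .
  have cross0: "II (\<lambda>x y. (q y - q x) * h x) = 0"
  proof -
    have "II (\<lambda>x y. (q y - q x) * h x) = (\<integral>x. \<pi> x * h x * (P q x - q x) \<partial>lborel)"
      using half[OF q_meas q_bnd, of h] c1 unfolding II_def IN_def by simp
    also have "\<dots> = (\<integral>x. (0::real) \<partial>(lborel::'a measure))"
    proof (rule Bochner_Integration.integral_cong[OF refl])
      fix x
      show "\<pi> x * h x * (P q x - q x) = 0"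
      proof (cases "x \<in> A \<or> x \<in> B")
        case True
        then have "h x = 0" using fA fB q_A q_B by (auto simp: h_def)
        then show ?thesis by simp
      next
        case False then show ?thesis using q_harm[of x] by simp
      qed
    qed
    finally show ?thesis by simp
  qed
  have cross1: "II (\<lambda>x y. (q y - q x) * h y) = 0"
    using anti[of q h] c1 c2 cross0 unfolding II_def IN_def by simp
  have "II (\<lambda>x y. (f y - f x)^2) = II (\<lambda>x y. ((q y - q x)^2 + (h y - h x)^2) + 2 * ((q y - q x) * h y - (q y - q x) * h x))"
    by (rule II_cong) (simp add: h_def power2_eq_square algebra_simps)
  also have "\<dots> = II (\<lambda>x y. (q y - q x)^2) + II (\<lambda>x y. (h y - h x)^2)
      + 2 * (II (\<lambda>x y. (q y - q x) * h y) - II (\<lambda>x y. (q y - q x) * h x))"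
    by (simp add: II_add II_diff II_cmult IN_add IN_diff IN_cmult Iq Ih c1 c2)
  finally have "II (\<lambda>x y. (f y - f x)^2) = II (\<lambda>x y. (q y - q x)^2) + II (\<lambda>x y. (h y - h x)^2)"
    using cross0 cross1 by simp
  then show ?thesis
    using energy_formula[OF f] energy_formula[OF Lq] energy_formula[OF Lh]
    unfolding II_def h_def by (simp add: algebra_simps)
qed

lemma C_meas[measurable]: "- (A \<union> B) \<in> sets borel" by measurable

lemma hb_Suc_ind: "hb (Suc n) y = indicator B y + indicator (- (A \<union> B)) y * P (hb n) y"
  using disj by (simp only: hb_Suc_P) (auto simp: indicator_def)

lemma reps_sets: "set (replicate j (- (A \<union> B)) @ [B]) \<subseteq> sets borel"
  by auto

lemma P_hb_path: "P (hb n) x = (\<Sum>j<Suc n. path_int p (replicate j (- (A \<union> B)) @ [B]) x)"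
proof (induction n arbitrary: x)
  case 0
  have "P (hb 0) x = path_int p [B] x"
    unfolding P_def by (simp add: indicator_def of_bool_def mult_ac)
  then show ?case by (simp del: hit_before.simps path_int.simps)
next
  case (Suc n)
  let ?C = "- (A \<union> B)"
  let ?f = "\<lambda>j y. path_int p (replicate j ?C @ [B]) y"
  have i1: "integrable lborel (\<lambda>y. p x y * indicator B y)"
    by (rule p_bnd_int[where K=1]) auto
  have i2: "integrable lborel (\<lambda>y. p x y * (indicator ?C y * ?f j y))" for j
  proof (rule p_bnd_int[where K=1])
    have [measurable]: "?f j \<in> borel_measurable borel" by (rule path_int_meas[OF reps_sets])
    show "(\<lambda>y. indicator ?C y * ?f j y) \<in> borel_measurable borel" by measurable
    fix y show "\<bar>indicator ?C y * ?f j y\<bar> \<le> 1"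
      using path_int_bnd[OF reps_sets, of j y] by (auto simp: indicator_def)
  qed
  have pw: "p x y * hb (Suc n) y = p x y * indicator B y + (\<Sum>j<Suc n. p x y * (indicator ?C y * ?f j y))" for y
  proof -
    have e: "(\<Sum>j<Suc n. p x y * (indicator ?C y * ?f j y)) = p x y * (indicator ?C y * (\<Sum>j<Suc n. ?f j y))"
      by (simp only: sum_distrib_left)
    show ?thesis by (simp only: hb_Suc_ind Suc.IH e distrib_left)
  qed
  have "P (hb (Suc n)) x = (\<integral>y. p x y * indicator B y + (\<Sum>j<Suc n. p x y * (indicator ?C y * ?f j y)) \<partial>lborel)"
    unfolding P_def pw by (rule refl)
  also have "\<dots> = (\<integral>y. p x y * indicator B y \<partial>lborel) + (\<Sum>j<Suc n. (\<integral>y. p x y * (indicator ?C y * ?f j y) \<partial>lborel))"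
    using i1 i2 by (simp add: Bochner_Integration.integral_add Bochner_Integration.integral_sum)
  also have "(\<integral>y. p x y * indicator B y \<partial>lborel) = ?f 0 x" by (simp add: mult_ac)
  also have "(\<lambda>j. (\<integral>y. p x y * (indicator ?C y * ?f j y) \<partial>lborel)) = (\<lambda>j. ?f (Suc j) x)"
    by (rule ext) (simp add: mult_ac)
  finally show ?case by (simp only: sum.lessThan_Suc_shift)
qed

end



locale chain = kernAB p \<pi> A B for p :: "'a::euclidean_space \<Rightarrow> 'a \<Rightarrow> real" and \<pi> A B +
  fixes M :: "'w measure" and X :: "nat \<Rightarrow> 'w \<Rightarrow> 'a"
  assumes M_prob: "prob_space M"
    and X_meas[measurable]: "\<And>n. X n \<in> borel_measurable M"
    and X_law: "\<And>S0 Ss. S0 \<in> sets borel \<Longrightarrow> set Ss \<subseteq> sets borel \<Longrightarrow>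
         measure M {\<omega>\<in>space M. X 0 \<omega> \<in> S0 \<and> (\<forall>i<length Ss. X (Suc i) \<omega> \<in> Ss ! i)}
           = (\<integral>x. indicator S0 x * \<pi> x * path_int p Ss x \<partial>lborel)"
    and ergodic: "\<And>S. S \<in> sets (Pi\<^sub>M UNIV (\<lambda>_. borel :: 'a measure)) \<Longrightarrow>
         (\<forall>f. f \<in> S \<longleftrightarrow> (\<lambda>n. f (Suc n)) \<in> S) \<Longrightarrow>
         measure M {\<omega>\<in>space M. (\<lambda>n. X n \<omega>) \<in> S} \<in> {0, 1}"
begin

abbreviation "\<Omega> \<equiv> Pi\<^sub>M UNIV (\<lambda>_::nat. (borel :: 'a measure))"

definition path :: "'w \<Rightarrow> nat \<Rightarrow> 'a" where "path \<omega> = (\<lambda>n. X n \<omega>)"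
definition shift :: "(nat \<Rightarrow> 'a) \<Rightarrow> nat \<Rightarrow> 'a" where "shift f = (\<lambda>n. f (Suc n))"
definition \<nu> :: "(nat \<Rightarrow> 'a) measure" where "\<nu> = distr M \<Omega> path"

lemma space_\<Omega>[simp]: "space \<Omega> = UNIV" by (simp add: space_PiM)

lemma path_meas[measurable]: "path \<in> measurable M \<Omega>"
  unfolding path_def by (rule measurable_PiM_single') auto

lemma shift_meas[measurable]: "shift \<in> measurable \<Omega> \<Omega>"
  unfolding shift_def by (rule measurable_PiM_single') auto

lemma nu_sets[simp]: "sets \<nu> = sets \<Omega>" by (simp add: \<nu>_def)
lemma nu_space[simp]: "space \<nu> = UNIV" by (simp add: \<nu>_def)

lemma nu_prob: "prob_space \<nu>"
  unfolding \<nu>_def by (rule prob_space.prob_space_distr[OF M_prob path_meas])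

lemma nu_measure: "S \<in> sets \<Omega> \<Longrightarrow> measure \<nu> S = measure M {\<omega>\<in>space M. path \<omega> \<in> S}"
  unfolding \<nu>_def by (subst measure_distr[OF path_meas]) (auto intro!: arg_cong[where f="measure M"])

lemma cyl_law:
  assumes J: "finite J" and As: "\<And>i. i \<in> J \<Longrightarrow> As i \<in> sets borel"
  shows "measure M {\<omega>\<in>space M. \<forall>i\<in>J. X (Suc i) \<omega> \<in> As i} = measure M {\<omega>\<in>space M. \<forall>i\<in>J. X i \<omega> \<in> As i}"
proof -
  obtain n where n: "J \<subseteq> {..<n}" using finite_nat_bounded[OF J] by blast
  define F where "F i = (if i \<in> J then As i else UNIV)" for i
  have F[measurable]: "F i \<in> sets borel" for i using As by (simp add: F_def)
  define Ss where "Ss = map (\<lambda>i. F (Suc i)) [0..<n]"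
  have Ss_sets: "set Ss \<subseteq> sets borel" using F by (auto simp: Ss_def)
  have Ss_nth: "i < n \<Longrightarrow> Ss ! i = F (Suc i)" for i by (simp add: Ss_def)
  have lSs: "length Ss = n" by (simp add: Ss_def)
  have FSs: "F 0 # Ss = map F [0..<Suc n]" unfolding Ss_def by (rule map_upt_Suc[symmetric])
  have e1: "{\<omega>\<in>space M. \<forall>i\<in>J. X i \<omega> \<in> As i}
      = {\<omega>\<in>space M. X 0 \<omega> \<in> F 0 \<and> (\<forall>i<length Ss. X (Suc i) \<omega> \<in> Ss ! i)}"
  proof (intro Collect_cong conj_cong refl iffI)
    fix \<omega> assume h: "\<forall>i\<in>J. X i \<omega> \<in> As i"
    show "X 0 \<omega> \<in> F 0 \<and> (\<forall>i<length Ss. X (Suc i) \<omega> \<in> Ss ! i)"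
      using h by (auto simp: F_def lSs Ss_nth)
  next
    fix \<omega> assume h: "X 0 \<omega> \<in> F 0 \<and> (\<forall>i<length Ss. X (Suc i) \<omega> \<in> Ss ! i)"
    show "\<forall>i\<in>J. X i \<omega> \<in> As i"
    proof
      fix i assume i: "i \<in> J"
      show "X i \<omega> \<in> As i"
      proof (cases i)
        case 0 then show ?thesis using h i by (simp add: F_def)
      next
        case (Suc k)
        then have "k < n" using i n by auto
        then show ?thesis using h i Suc by (auto simp: F_def lSs Ss_nth)
      qed
    qed
  qed
  have e2: "{\<omega>\<in>space M. \<forall>i\<in>J. X (Suc i) \<omega> \<in> As i}
      = {\<omega>\<in>space M. X 0 \<omega> \<in> UNIV \<and> (\<forall>i<length (F 0 # Ss). X (Suc i) \<omega> \<in> (F 0 # Ss) ! i)}"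
  proof (intro Collect_cong conj_cong refl iffI)
    have FSs_nth: "i < Suc n \<Longrightarrow> (F 0 # Ss) ! i = F i" for i
      unfolding FSs by (simp del: upt_Suc add: nth_map_upt)
    have lF: "length (F 0 # Ss) = Suc n" by (simp add: lSs)
    fix \<omega>
    show "\<forall>i\<in>J. X (Suc i) \<omega> \<in> As i \<Longrightarrow> X 0 \<omega> \<in> UNIV \<and> (\<forall>i<length (F 0 # Ss). X (Suc i) \<omega> \<in> (F 0 # Ss) ! i)"
      unfolding lF using FSs_nth by (auto simp: F_def)
    assume h: "X 0 \<omega> \<in> UNIV \<and> (\<forall>i<length (F 0 # Ss). X (Suc i) \<omega> \<in> (F 0 # Ss) ! i)"
    show "\<forall>i\<in>J. X (Suc i) \<omega> \<in> As i"
    proof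
      fix i assume i: "i \<in> J"
      then have "i < Suc n" using n by auto
      then show "X (Suc i) \<omega> \<in> As i" using h FSs_nth[of i] i unfolding lF by (auto simp: F_def)
    qed
  qed
  have "measure M {\<omega>\<in>space M. \<forall>i\<in>J. X (Suc i) \<omega> \<in> As i}
      = (\<integral>x. indicator UNIV x * \<pi> x * path_int p (F 0 # Ss) x \<partial>lborel)"
    unfolding e2 by (rule X_law) (use Ss_sets in auto)
  also have "\<dots> = (\<integral>x. \<pi> x * P (\<lambda>y. indicator (F 0) y * path_int p Ss y) x \<partial>lborel)"
    by (simp del: path_int.simps add: path_int_Cons_P)
  also have "\<dots> = (\<integral>y. \<pi> y * (indicator (F 0) y * path_int p Ss y) \<partial>lborel)"
  proof (rule invariance[where K=1])
    have [measurable]: "path_int p Ss \<in> borel_measurable borel" by (rule path_int_meas[OF Ss_sets])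
    show "(\<lambda>y. indicator (F 0) y * path_int p Ss y) \<in> borel_measurable borel" by measurable
    fix y show "\<bar>indicator (F 0) y * path_int p Ss y\<bar> \<le> 1"
      using path_int_bnd[OF Ss_sets, of y] by (auto simp: indicator_def)
  qed
  also have "\<dots> = (\<integral>x. indicator (F 0) x * \<pi> x * path_int p Ss x \<partial>lborel)"
    by (simp add: mult_ac)
  also have "\<dots> = measure M {\<omega>\<in>space M. \<forall>i\<in>J. X i \<omega> \<in> As i}"
    unfolding e1 by (rule X_law[symmetric]) (use Ss_sets in auto)
  finally show ?thesis .
qed

lemma path_emb: "path \<omega> \<in> prod_emb UNIV (\<lambda>_. borel) J (Pi\<^sub>E J As) \<longleftrightarrow> (\<forall>i\<in>J. X i \<omega> \<in> As i)"
  by (simp add: prod_emb_iff path_def PiE_iff)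

lemma shift_path_emb: "shift (path \<omega>) \<in> prod_emb UNIV (\<lambda>_. borel) J (Pi\<^sub>E J As) \<longleftrightarrow> (\<forall>i\<in>J. X (Suc i) \<omega> \<in> As i)"
  by (simp add: prod_emb_iff path_def shift_def PiE_iff)

lemma stationary: "distr \<nu> \<Omega> shift = \<nu>"
proof (rule measure_eqI_PiM_infinite)
  show "sets (distr \<nu> \<Omega> shift) = sets \<Omega>" by simp
  show "sets \<nu> = sets \<Omega>" by simp
  show "finite_measure (distr \<nu> \<Omega> shift)"
  proof -
    have "shift \<in> measurable \<nu> \<Omega>" using shift_meas by (simp add: measurable_cong_sets[OF nu_sets refl])
    then have "prob_space (distr \<nu> \<Omega> shift)" by (rule prob_space.prob_space_distr[OF nu_prob])
    then show ?thesis by (simp add: prob_space_def)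
  qed
  fix As J assume J: "finite J" "J \<subseteq> (UNIV :: nat set)" and As: "\<And>i. i \<in> J \<Longrightarrow> As i \<in> sets (borel :: 'a measure)"
  let ?E = "prod_emb UNIV (\<lambda>_. borel :: 'a measure) J (Pi\<^sub>E J As)"
  have E: "?E \<in> sets \<Omega>" using As J by (intro sets_PiM_I) auto
  interpret Mp: prob_space M by (rule M_prob)
  have sm: "shift \<in> measurable \<nu> \<Omega>" using shift_meas by (simp add: measurable_cong_sets[OF nu_sets refl])
  have E2: "shift -` ?E \<inter> space \<nu> \<in> sets \<Omega>" using measurable_sets[OF sm E] by simp
  have "emeasure (distr \<nu> \<Omega> shift) ?E = emeasure \<nu> (shift -` ?E \<inter> space \<nu>)"
    using emeasure_distr[OF sm E] .
  also have "\<dots> = emeasure M (path -` (shift -` ?E \<inter> space \<nu>) \<inter> space M)"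
    using emeasure_distr[OF path_meas E2] unfolding \<nu>_def[symmetric] .
  also have "path -` (shift -` ?E \<inter> space \<nu>) \<inter> space M = {\<omega>\<in>space M. \<forall>i\<in>J. X (Suc i) \<omega> \<in> As i}"
    using shift_path_emb[of _ J As] by (auto simp: set_eq_iff)
  also have "emeasure M {\<omega>\<in>space M. \<forall>i\<in>J. X (Suc i) \<omega> \<in> As i} = emeasure M {\<omega>\<in>space M. \<forall>i\<in>J. X i \<omega> \<in> As i}"
    unfolding Mp.emeasure_eq_measure using cyl_law[OF J(1) As] by (rule arg_cong)
  also have "{\<omega>\<in>space M. \<forall>i\<in>J. X i \<omega> \<in> As i} = path -` ?E \<inter> space M"
    using path_emb[of _ J As] by (auto simp: set_eq_iff)
  also have "emeasure M \<dots> = emeasure \<nu> ?E"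
    using emeasure_distr[OF path_meas E, symmetric] unfolding \<nu>_def[symmetric] .
  finally show "emeasure (distr \<nu> \<Omega> shift) ?E = emeasure \<nu> ?E" .
qed

definition R :: "(nat \<Rightarrow> 'a) set" where
  "R = {f. f 0 \<in> A \<and> (\<exists>j>0. f j \<in> B \<and> (\<forall>i. 0 < i \<and> i < j \<longrightarrow> f i \<notin> A \<union> B))}"

lemma R_meas[measurable]: "R \<in> sets \<Omega>"
proof -
  have "R = {f\<in>space \<Omega>. f 0 \<in> A \<and> (\<exists>j::nat. 0 < j \<and> f j \<in> B \<and> (\<forall>i::nat. 0 < i \<and> i < j \<longrightarrow> f i \<notin> A \<union> B))}"
    by (auto simp: R_def)
  also have "\<dots> \<in> sets \<Omega>" by measurable
  finally show ?thesis .
qed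

lemma funpow_shift: "(shift ^^ m) f = (\<lambda>n. f (n + m))"
  by (induction m arbitrary: f) (auto simp: shift_def)

lemma shift_R: "(shift ^^ m) (path \<omega>) \<in> R \<longleftrightarrow>
   (X m \<omega> \<in> A \<and> (\<exists>j>0. X (m + j) \<omega> \<in> B \<and> (\<forall>i. m < i \<and> i < m + j \<longrightarrow> X i \<omega> \<notin> A \<union> B)))"
proof -
  have e: "(\<forall>i. 0 < i \<and> i < j \<longrightarrow> X (i + m) \<omega> \<notin> A \<union> B) \<longleftrightarrow> (\<forall>i. m < i \<and> i < m + j \<longrightarrow> X i \<omega> \<notin> A \<union> B)" for j
  proof
    assume h: "\<forall>i. 0 < i \<and> i < j \<longrightarrow> X (i + m) \<omega> \<notin> A \<union> B"
    show "\<forall>i. m < i \<and> i < m + j \<longrightarrow> X i \<omega> \<notin> A \<union> B"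
    proof (intro allI impI)
      fix i assume i: "m < i \<and> i < m + j"
      then have "0 < i - m \<and> i - m < j" by auto
      then have "X (i - m + m) \<omega> \<notin> A \<union> B" using h by blast
      then show "X i \<omega> \<notin> A \<union> B" using i by simp
    qed
  next
    assume h: "\<forall>i. m < i \<and> i < m + j \<longrightarrow> X i \<omega> \<notin> A \<union> B"
    then show "\<forall>i. 0 < i \<and> i < j \<longrightarrow> X (i + m) \<omega> \<notin> A \<union> B" by auto
  qed
  show ?thesis unfolding R_def funpow_shift path_def using e by (simp add: add.commute)
qed

lemma bsum_count: "bsum shift (indicator R) n (path \<omega>) = real (reactive_count A B X n \<omega>)"
proof -
  let ?Q = "{m. X m \<omega> \<in> A \<and> (\<exists>j>0. X (m + j) \<omega> \<in> B \<and> (\<forall>i. m < i \<and> i < m + j \<longrightarrow> X i \<omega> \<notin> A \<union> B))}"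
  have "bsum shift (indicator R) n (path \<omega>) = (\<Sum>m<n. indicator ?Q m)"
    unfolding bsum_def by (intro sum.cong refl) (simp add: indicator_def shift_R)
  also have "\<dots> = (\<Sum>m\<in>{..<n} \<inter> ?Q. 1)"
    by (simp add: sum.inter_restrict[OF finite_lessThan] indicator_def)
  also have "\<dots> = real (card ({..<n} \<inter> ?Q))" by simp
  also have "{..<n} \<inter> ?Q = {m. m < n \<and> (\<exists>j>0. X m \<omega> \<in> A \<and> X (m + j) \<omega> \<in> B \<and>
       (\<forall>i. m < i \<and> i < m + j \<longrightarrow> X i \<omega> \<notin> A \<union> B))}" by auto
  finally show ?thesis unfolding reactive_count_def .
qed

lemma shift_meas_nu: "shift \<in> measurable \<nu> \<nu>"
  using shift_meas by (simp add: measurable_cong_sets[OF nu_sets nu_sets])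

lemma stationary_nu: "distr \<nu> \<nu> shift = \<nu>"
proof -
  have "distr \<nu> \<nu> shift = distr \<nu> \<Omega> shift" by (rule distr_cong) auto
  then show ?thesis using stationary by simp
qed

lemma erg_nu: "erg_sys \<nu> shift"
  unfolding erg_sys_def erg_sys_axioms_def using nu_prob shift_meas_nu stationary_nu by auto

lemma nu_ergodic:
  assumes S: "S \<in> sets \<nu>" and inv: "\<forall>w\<in>space \<nu>. w \<in> S \<longleftrightarrow> shift w \<in> S"
  shows "measure \<nu> S = 0 \<or> measure \<nu> S = 1"
proof -
  have S': "S \<in> sets \<Omega>" using S by simp
  have "\<forall>f. f \<in> S \<longleftrightarrow> (\<lambda>n. f (Suc n)) \<in> S" using inv by (simp add: shift_def)
  then have "measure M {\<omega>\<in>space M. (\<lambda>n. X n \<omega>) \<in> S} \<in> {0, 1}" using ergodic S' by blast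
  then show ?thesis using nu_measure[OF S'] by (auto simp: path_def)
qed

lemma rate_AE: "AE \<omega> in M. (\<lambda>n. real (reactive_count A B X n \<omega>) / real n) \<longlonglongrightarrow> measure \<nu> R"
proof -
  interpret E: erg_sys \<nu> shift by (rule erg_nu)
  have g[measurable]: "indicator R \<in> borel_measurable \<nu>" by (rule borel_measurable_indicator) simp
  have "AE w in \<nu>. (\<lambda>n. bsum shift (indicator R) n w / n) \<longlonglongrightarrow> (\<integral>w. indicator R w \<partial>\<nu>)"
  proof (rule E.birkhoff[OF g])
    show "\<And>S. S \<in> sets \<nu> \<Longrightarrow> \<forall>w\<in>space \<nu>. (w \<in> S) = (shift w \<in> S) \<Longrightarrow> measure \<nu> S = 0 \<or> measure \<nu> S = 1"
      by (rule nu_ergodic)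
  qed (auto simp: indicator_def)
  moreover have "(\<integral>w. indicator R w \<partial>\<nu>) = measure \<nu> R"
    using E.emeasure_finite by simp
  ultimately have H: "AE w in \<nu>. (\<lambda>n. bsum shift (indicator R) n w / n) \<longlonglongrightarrow> measure \<nu> R"
    by simp
  have "AE \<omega> in M. (\<lambda>n. bsum shift (indicator R) n (path \<omega>) / n) \<longlonglongrightarrow> measure \<nu> R"
    using AE_distrD[OF path_meas H[unfolded \<nu>_def]] unfolding \<nu>_def[symmetric] .
  then show ?thesis by (simp add: bsum_count)
qed

lemma rate_eq: "trans_rate M A B X = measure \<nu> R"
  unfolding trans_rate_def
proof (rule the_equality)
  show "AE \<omega> in M. (\<lambda>n. real (reactive_count A B X n \<omega>) / real n) \<longlonglongrightarrow> measure \<nu> R" by (rule rate_AE)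
  fix k assume k: "AE \<omega> in M. (\<lambda>n. real (reactive_count A B X n \<omega>) / real n) \<longlonglongrightarrow> k"
  interpret Mp: prob_space M by (rule M_prob)
  have "AE \<omega> in M. k = measure \<nu> R"
    using k rate_AE by eventually_elim (rule LIMSEQ_unique)
  then show "k = measure \<nu> R" by simp
qed

definition Rj :: "nat \<Rightarrow> (nat \<Rightarrow> 'a) set" where
  "Rj j = {f. f 0 \<in> A \<and> (\<forall>i. 0 < i \<and> i < Suc j \<longrightarrow> f i \<notin> A \<union> B) \<and> f (Suc j) \<in> B}"

definition G :: "nat \<Rightarrow> (nat \<Rightarrow> 'a) set" where
  "G n = {f. f 0 \<in> A \<and> (\<exists>j<n. f (Suc j) \<in> B \<and> (\<forall>i. 0 < i \<and> i < Suc j \<longrightarrow> f i \<notin> A \<union> B))}"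

lemma Rj_meas[measurable]: "Rj j \<in> sets \<Omega>"
proof -
  have "Rj j = {f\<in>space \<Omega>. f 0 \<in> A \<and> (\<forall>i::nat. 0 < i \<and> i < Suc j \<longrightarrow> f i \<notin> A \<union> B) \<and> f (Suc j) \<in> B}"
    by (auto simp: Rj_def)
  also have "\<dots> \<in> sets \<Omega>" by measurable
  finally show ?thesis .
qed

lemma G_meas[measurable]: "G n \<in> sets \<Omega>"
proof -
  have "G n = {f\<in>space \<Omega>. f 0 \<in> A \<and> (\<exists>j::nat. j < n \<and> f (Suc j) \<in> B \<and> (\<forall>i::nat. 0 < i \<and> i < Suc j \<longrightarrow> f i \<notin> A \<union> B))}"
    by (auto simp: G_def)
  also have "\<dots> \<in> sets \<Omega>" by measurable
  finally show ?thesis .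
qed

lemma ex_less_Suc_iff: "(\<exists>j<Suc n. Q j) \<longleftrightarrow> (\<exists>j<n. Q j) \<or> Q n"
  by (auto simp: less_Suc_eq)

lemma G_Suc: "G (Suc n) = G n \<union> Rj n"
proof -
  have "f \<in> G (Suc n) \<longleftrightarrow> f \<in> G n \<or> f \<in> Rj n" for f
    unfolding G_def Rj_def mem_Collect_eq ex_less_Suc_iff by blast
  then show ?thesis by blast
qed

lemma G_Rj_disj: "G n \<inter> Rj n = {}"
proof -
  { fix f assume f: "f \<in> G n" "f \<in> Rj n"
    then obtain j where j: "j < n" "f (Suc j) \<in> B" unfolding G_def by auto
    have "f (Suc j) \<notin> A \<union> B" using f(2) j(1) unfolding Rj_def by auto
    then have False using j by auto }
  then show ?thesis by blast
qed

lemma G_inc: "incseq G"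
  by (rule incseq_SucI) (auto simp: G_Suc)

lemma G_Un: "(\<Union>n. G n) = R"
proof
  show "(\<Union>n. G n) \<subseteq> R"
  proof
    fix f assume "f \<in> (\<Union>n. G n)"
    then obtain n j where j: "f 0 \<in> A" "j < n" "f (Suc j) \<in> B" "\<forall>i. 0 < i \<and> i < Suc j \<longrightarrow> f i \<notin> A \<union> B"
      unfolding G_def by blast
    show "f \<in> R" unfolding R_def using j by (intro CollectI conjI exI[of _ "Suc j"]) auto
  qed
  show "R \<subseteq> (\<Union>n. G n)"
  proof
    fix f assume "f \<in> R"
    then obtain j where j: "f 0 \<in> A" "0 < j" "f j \<in> B" "\<forall>i. 0 < i \<and> i < j \<longrightarrow> f i \<notin> A \<union> B"
      unfolding R_def by auto
    then obtain k where k: "j = Suc k" by (cases j) auto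
    have "f \<in> G (Suc k)" unfolding G_def using j k by auto
    then show "f \<in> (\<Union>n. G n)" by blast
  qed
qed

lemma Rj_law: "measure \<nu> (Rj j) = (\<integral>x. indicator A x * \<pi> x * path_int p (replicate j (- (A \<union> B)) @ [B]) x \<partial>lborel)"
proof -
  let ?Ss = "replicate j (- (A \<union> B)) @ [B]"
  have nth: "i < Suc j \<Longrightarrow> ?Ss ! i = (if i < j then - (A \<union> B) else B)" for i
    by (auto simp: nth_append)
  have "{\<omega>\<in>space M. path \<omega> \<in> Rj j} = {\<omega>\<in>space M. X 0 \<omega> \<in> A \<and> (\<forall>i<length ?Ss. X (Suc i) \<omega> \<in> ?Ss ! i)}"
  proof (intro Collect_cong conj_cong refl iffI)
    fix \<omega>
    assume h: "path \<omega> \<in> Rj j"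
    show "X 0 \<omega> \<in> A \<and> (\<forall>i<length ?Ss. X (Suc i) \<omega> \<in> ?Ss ! i)"
    proof (intro conjI allI impI)
      show "X 0 \<omega> \<in> A" using h by (simp add: Rj_def path_def)
      fix i assume i: "i < length ?Ss"
      then have i': "i < Suc j" by simp
      show "X (Suc i) \<omega> \<in> ?Ss ! i"
      proof (cases "i < j")
        case True
        then have "X (Suc i) \<omega> \<notin> A \<union> B" using h by (simp add: Rj_def path_def)
        then show ?thesis using nth[OF i'] True by simp
      next
        case False
        then have "i = j" using i' by simp
        then show ?thesis using h nth[OF i'] by (simp add: Rj_def path_def)
      qed
    qed
  next
    fix \<omega>
    assume h: "X 0 \<omega> \<in> A \<and> (\<forall>i<length ?Ss. X (Suc i) \<omega> \<in> ?Ss ! i)"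
    have a: "X (Suc i) \<omega> \<in> (if i < j then - (A \<union> B) else B)" if "i < Suc j" for i
      using h that nth[OF that] by auto
    show "path \<omega> \<in> Rj j" unfolding Rj_def path_def
    proof (intro CollectI conjI allI impI)
      show "X 0 \<omega> \<in> A" using h by simp
      show "X (Suc j) \<omega> \<in> B" using a[of j] by simp
      fix i assume i: "0 < i \<and> i < Suc j"
      then obtain k where k: "i = Suc k" "k < j" by (cases i) auto
      show "X i \<omega> \<notin> A \<union> B" using a[of k] k by simp
    qed
  qed
  then have "measure \<nu> (Rj j) = measure M {\<omega>\<in>space M. X 0 \<omega> \<in> A \<and> (\<forall>i<length ?Ss. X (Suc i) \<omega> \<in> ?Ss ! i)}"
    using nu_measure[OF Rj_meas] by simp
  also have "\<dots> = (\<integral>x. indicator A x * \<pi> x * path_int p ?Ss x \<partial>lborel)"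
    by (rule X_law) (use reps_sets in auto)
  finally show ?thesis .
qed

lemma G_law: "measure \<nu> (G (Suc m)) = (\<integral>x. indicator A x * \<pi> x * P (hb m) x \<partial>lborel)"
proof -
  interpret N: prob_space \<nu> by (rule nu_prob)
  have G0: "G 0 = {}" by (simp add: G_def)
  have "measure \<nu> (G n) = (\<Sum>j<n. measure \<nu> (Rj j))" for n
  proof (induction n)
    case 0 then show ?case by (simp add: G0)
  next
    case (Suc n)
    have "measure \<nu> (G (Suc n)) = measure \<nu> (G n) + measure \<nu> (Rj n)"
      unfolding G_Suc by (rule N.finite_measure_Union) (auto simp: G_Rj_disj)
    then show ?case using Suc by simp
  qed
  then have "measure \<nu> (G (Suc m)) = (\<Sum>j<Suc m. (\<integral>x. indicator A x * \<pi> x * path_int p (replicate j (- (A \<union> B)) @ [B]) x \<partial>lborel))"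
    by (simp add: Rj_law)
  also have "\<dots> = (\<integral>x. (\<Sum>j<Suc m. indicator A x * \<pi> x * path_int p (replicate j (- (A \<union> B)) @ [B]) x) \<partial>lborel)"
  proof (rule Bochner_Integration.integral_sum[symmetric])
    fix j
    have [measurable]: "path_int p (replicate j (- (A \<union> B)) @ [B]) \<in> borel_measurable borel"
      by (rule path_int_meas[OF reps_sets])
    have "integrable lborel (\<lambda>x. \<pi> x * (indicator A x * path_int p (replicate j (- (A \<union> B)) @ [B]) x))"
    proof (rule pi_bnd_int[where K=1])
      show "(\<lambda>x. indicator A x * path_int p (replicate j (- (A \<union> B)) @ [B]) x) \<in> borel_measurable borel" by measurable
      fix x show "\<bar>indicator A x * path_int p (replicate j (- (A \<union> B)) @ [B]) x\<bar> \<le> 1"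
        using path_int_bnd[OF reps_sets, of j x] by (auto simp: indicator_def)
    qed
    then show "integrable lborel (\<lambda>x. indicator A x * \<pi> x * path_int p (replicate j (- (A \<union> B)) @ [B]) x)"
      by (simp add: mult_ac)
  qed
  also have "\<dots> = (\<integral>x. indicator A x * \<pi> x * P (hb m) x \<partial>lborel)"
    by (simp only: P_hb_path sum_distrib_left)
  finally show ?thesis .
qed

lemma nu_R: "measure \<nu> R = (\<integral>x. indicator A x * \<pi> x * P q x \<partial>lborel)"
proof -
  interpret N: prob_space \<nu> by (rule nu_prob)
  have "(\<lambda>n. measure \<nu> (G n)) \<longlonglongrightarrow> measure \<nu> (\<Union>n. G n)"
    by (rule N.finite_Lim_measure_incseq) (use G_inc in auto)
  then have l1: "(\<lambda>m. measure \<nu> (G (Suc m))) \<longlonglongrightarrow> measure \<nu> R"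
    unfolding G_Un by (rule LIMSEQ_Suc)
  have l2: "(\<lambda>m. (\<integral>x. indicator A x * \<pi> x * P (hb m) x \<partial>lborel)) \<longlonglongrightarrow> (\<integral>x. indicator A x * \<pi> x * P q x \<partial>lborel)"
  proof (rule integral_dominated_convergence[where w=\<pi>])
    show "integrable lborel \<pi>" by (rule pi_int)
    show "AE x in lborel. (\<lambda>m. indicator A x * \<pi> x * P (hb m) x) \<longlonglongrightarrow> indicator A x * \<pi> x * P q x"
      by (intro AE_I2 tendsto_mult tendsto_const Pq_lim)
    show "AE x in lborel. norm (indicator A x * \<pi> x * P (hb m) x) \<le> \<pi> x" for m
    proof (intro AE_I2)
      fix x
      have "\<bar>P (hb m) x\<bar> \<le> 1" by (rule P_bnd[OF hb_meas hb_bnd])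
      then have "\<bar>indicator A x * P (hb m) x\<bar> \<le> 1" by (auto simp: indicator_def)
      then have "\<pi> x * \<bar>indicator A x * P (hb m) x\<bar> \<le> \<pi> x * 1" using pi_pos[of x] by (intro mult_left_mono) auto
      then show "norm (indicator A x * \<pi> x * P (hb m) x) \<le> \<pi> x"
        using pi_pos[of x] by (simp add: abs_mult mult_ac)
    qed
  qed measurable
  show ?thesis using LIMSEQ_unique[OF l1] l2 G_law by simp
qed

end

theorem proposition2p7:
  fixes p :: "real^'d \<Rightarrow> real^'d \<Rightarrow> real" and \<pi> :: "real^'d \<Rightarrow> real"
    and M :: "'w measure" and X :: "nat \<Rightarrow> 'w \<Rightarrow> real^'d"
    and A B :: "(real^'d) set"
  assumes p_meas: "(\<lambda>(x, y). p x y) \<in> borel_measurable borel"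
    and p_pos: "\<And>x y. p x y > 0"
    and p_int: "\<And>x. integrable lborel (\<lambda>y. p x y)"
    and p_norm: "\<And>x. (\<integral>y. p x y \<partial>lborel) = 1"
    and pi_meas: "\<pi> \<in> borel_measurable borel"
    and pi_pos: "\<And>x. \<pi> x > 0"
    and pi_int: "integrable lborel \<pi>"
    and pi_norm: "(\<integral>x. \<pi> x \<partial>lborel) = 1"
    and reversible: "\<And>x y. p x y * \<pi> x = p y x * \<pi> y"
    and unique_inv: "\<And>\<nu>. prob_space \<nu> \<Longrightarrow> sets \<nu> = sets borel \<Longrightarrow>
         (\<forall>S\<in>sets borel. measure \<nu> S = (\<integral>x. (\<integral>y. indicator S y * p x y \<partial>lborel) \<partial>\<nu>)) \<Longrightarrow>
         \<nu> = density lborel (\<lambda>x. ennreal (\<pi> x))"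
    and M_prob: "prob_space M"
    and X_meas: "\<And>n. X n \<in> borel_measurable M"
    and X_law: "\<And>S0 Ss. S0 \<in> sets borel \<Longrightarrow> set Ss \<subseteq> sets borel \<Longrightarrow>
         measure M {\<omega>\<in>space M. X 0 \<omega> \<in> S0 \<and> (\<forall>i<length Ss. X (Suc i) \<omega> \<in> Ss ! i)}
           = (\<integral>x. indicator S0 x * \<pi> x * path_int p Ss x \<partial>lborel)"
    and ergodic: "\<And>S. S \<in> sets (Pi\<^sub>M UNIV (\<lambda>_. borel :: (real^'d) measure)) \<Longrightarrow>
         (\<forall>f. f \<in> S \<longleftrightarrow> (\<lambda>n. f (Suc n)) \<in> S) \<Longrightarrow>
         measure M {\<omega>\<in>space M. (\<lambda>n. X n \<omega>) \<in> S} \<in> {0, 1}"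
    and A_closed: "closed A" and B_closed: "closed B"
    and disj: "A \<inter> B = {}"
    and A_smooth: "smooth_boundary A" and B_smooth: "smooth_boundary B"
    and C_ne: "- (A \<union> B) \<noteq> {}"
  shows "(\<forall>f\<in>F_AB \<pi> A B.
            dirichlet_energy p \<pi> f = trans_rate M A B X
              + dirichlet_energy p \<pi> (\<lambda>x. f x - committor p A B x))
       \<and> committor p A B \<in> F_AB \<pi> A B
       \<and> dirichlet_energy p \<pi> (committor p A B) = trans_rate M A B X
       \<and> (\<forall>f\<in>F_AB \<pi> A B. dirichlet_energy p \<pi> (committor p A B) \<le> dirichlet_energy p \<pi> f)"
  proof -
  have K: "kern p \<pi>"
    by (rule kern.intro) (use p_meas p_pos p_int p_norm pi_meas pi_pos pi_int pi_norm reversible in auto)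
  have KAB: "kernAB p \<pi> A B"
  proof (rule kernAB.intro[OF K], rule kernAB_axioms.intro)
    show "A \<in> sets borel" using A_closed by (rule borel_closed)
    show "B \<in> sets borel" using B_closed by (rule borel_closed)
  qed (rule disj)
  interpret C: chain p \<pi> A B M X
  proof (rule chain.intro[OF KAB], rule chain_axioms.intro)
    show "prob_space M" by (rule M_prob)
    show "\<And>n. X n \<in> borel_measurable M" by (rule X_meas)
    show "\<And>S0 Ss. S0 \<in> sets borel \<Longrightarrow> set Ss \<subseteq> sets borel \<Longrightarrow>
         measure M {\<omega>\<in>space M. X 0 \<omega> \<in> S0 \<and> (\<forall>i<length Ss. X (Suc i) \<omega> \<in> Ss ! i)}
           = (\<integral>x. indicator S0 x * \<pi> x * path_int p Ss x \<partial>lborel)" by (rule X_law)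
    show "\<And>S. S \<in> sets (Pi\<^sub>M UNIV (\<lambda>_. borel :: (real^'d) measure)) \<Longrightarrow>
         (\<forall>f. f \<in> S \<longleftrightarrow> (\<lambda>n. f (Suc n)) \<in> S) \<Longrightarrow>
         measure M {\<omega>\<in>space M. (\<lambda>n. X n \<omega>) \<in> S} \<in> {0, 1}" by (rule ergodic)
  qed
  have L2eq: "L2_mu \<pi> f \<longleftrightarrow> C.L2 f" for f
  proof
    assume h: "L2_mu \<pi> f"
    then have [measurable]: "f \<in> borel_measurable borel" by (simp add: L2_mu_def)
    have "integrable lborel (\<lambda>x. \<pi> x *\<^sub>R (f x)^2)"
      using h integrable_density[of "\<lambda>x. (f x)^2" lborel \<pi>] pi_pos
      by (simp add: L2_mu_def less_imp_le)
    then show "C.L2 f" by (simp add: C.L2_def)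
  next
    assume h: "C.L2 f"
    then have [measurable]: "f \<in> borel_measurable borel" by (simp add: C.L2_def)
    have "integrable (density lborel (\<lambda>x. ennreal (\<pi> x))) (\<lambda>x. (f x)^2)"
      using h integrable_density[of "\<lambda>x. (f x)^2" lborel \<pi>] pi_pos
      by (simp add: C.L2_def less_imp_le)
    then show "L2_mu \<pi> f" by (simp add: L2_mu_def)
  qed
  have rate: "trans_rate M A B X = dirichlet_energy p \<pi> (committor p A B)"
    using C.rate_eq C.nu_R C.E_q by simp
  have qF: "committor p A B \<in> F_AB \<pi> A B"
    unfolding F_AB_def using C.L2_bnd[OF C.q_meas C.q_bnd] L2eq C.q_A C.q_B by auto
  have nonneg: "0 \<le> dirichlet_energy p \<pi> g" for g
  proof -
    have "0 \<le> (\<integral>x. (\<integral>y. (g y - g x)^2 * p x y \<partial>lborel) \<partial>(density lborel (\<lambda>x. ennreal (\<pi> x))))"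
      by (intro integral_nonneg_AE AE_I2 integral_nonneg_AE mult_nonneg_nonneg) (auto intro: less_imp_le p_pos)
    then show ?thesis unfolding dirichlet_energy_def by simp
  qed
  have dec: "\<forall>f\<in>F_AB \<pi> A B. dirichlet_energy p \<pi> f = trans_rate M A B X
              + dirichlet_energy p \<pi> (\<lambda>x. f x - committor p A B x)"
  proof
    fix f assume "f \<in> F_AB \<pi> A B"
    then have f: "C.L2 f" "\<forall>x\<in>A. f x = 0" "\<forall>x\<in>B. f x = 1" unfolding F_AB_def using L2eq by auto
    show "dirichlet_energy p \<pi> f = trans_rate M A B X + dirichlet_energy p \<pi> (\<lambda>x. f x - committor p A B x)"
      using C.E_decomp[OF f] rate by simp
  qed
  have mn: "\<forall>f\<in>F_AB \<pi> A B. dirichlet_energy p \<pi> (committor p A B) \<le> dirichlet_energy p \<pi> f"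
  proof
    fix f assume f: "f \<in> F_AB \<pi> A B"
    have "dirichlet_energy p \<pi> f = trans_rate M A B X + dirichlet_energy p \<pi> (\<lambda>x. f x - committor p A B x)"
      using dec f by blast
    moreover have "0 \<le> dirichlet_energy p \<pi> (\<lambda>x. f x - committor p A B x)" by (rule nonneg)
    ultimately show "dirichlet_energy p \<pi> (committor p A B) \<le> dirichlet_energy p \<pi> f"
      using rate by linarith
  qed
  have "dirichlet_energy p \<pi> (committor p A B) = trans_rate M A B X" using rate by simp
  with dec qF mn show ?thesis by blast
qed

end
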